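(* Let $\mathcal{F}$ be a one-dimensional $p$-divisible formal group over $\mathbb{Z}_p$ of finite height, and for $n\in\mathbb{Z}$ let $[n]$ denote the multiplication-by-$n$ endomorphism of $\mathcal{F}$. Let $\alpha_1,\alpha_2\in p\mathbb{Z}_p$ with $v_p(\alpha_1)=v_p(\alpha_2)$. Then there exist $\phi\in\mathbb{Z}_p[[X,Y]]$ and an infinite set $S\subset\mathbb{N}^2$ such that $\phi([n](\alpha_1),[m](\alpha_2))=0$ for all $(n,m)\in S$, and $S$ is not contained in any finite union of lines (so the zeroes of $\phi$ along $S$ do not come from a translate of a formal subgroup of $\mathcal{F}^2$).
   Context: $v_p$ is the $p$-adic valuation. $[n](\alpha)$ is obtained by evaluating at $\alpha$ the power series in $\mathbb{Z}_p[[X]]$ giving multiplication by $n$ in the formal group law of $\mathcal{F}$. *)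

theory Defs
  imports Main "HOL-Computational_Algebra.Formal_Power_Series" "HOL-Library.Extended_Nat" "HOL-Library.Cardinality"
begin

unbundle fps_syntax

section \<open>The p-adic integers Z_p, with p = CARD('p)\<close>

text \<open>An element of Z_p is a coherent sequence of residues x_k in {0..<p^k} (its image in Z/p^k Z).\<close>

class nontriv_card = finite +
  assumes card_gt1: "1 < CARD('a)"

definition padic_coh :: "'p::nontriv_card itself \<Rightarrow> (nat \<Rightarrow> int) \<Rightarrow> bool" where
  "padic_coh _ x \<longleftrightarrow> (\<forall>k. 0 \<le> x k \<and> x k < int CARD('p) ^ k \<and> x (Suc k) mod int CARD('p) ^ k = x k)"

typedef ('p::nontriv_card) padic = "{x::nat \<Rightarrow> int. padic_coh TYPE('p) x}"
  morphisms digits Abs_padic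
  by (rule exI[of _ "\<lambda>_. 0"]) (simp add: padic_coh_def card_gt1)

setup_lifting type_definition_padic

lemma padic_pos: "0 < int CARD('p::nontriv_card) ^ k"
  using card_gt1[where 'a='p] by simp

lemma padic_mod_mod: "(a mod int CARD('p::nontriv_card) ^ Suc k) mod int CARD('p) ^ k = a mod int CARD('p) ^ k"
  by (rule mod_mod_cancel) simp

lemma coh_weak:
  assumes "padic_coh TYPE('p::nontriv_card) x"
  shows "x (Suc k) mod int CARD('p) ^ k = x k mod int CARD('p) ^ k" and "x k mod int CARD('p) ^ k = x k"
  using assms by (auto simp: padic_coh_def mod_pos_pos_trivial)

lemma coh_normalize:
  assumes "\<And>k. x (Suc k) mod int CARD('p::nontriv_card) ^ k = x k mod int CARD('p) ^ k"
  shows "padic_coh TYPE('p) (\<lambda>k. x k mod int CARD('p) ^ k)"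
  unfolding padic_coh_def
proof (intro allI conjI)
  fix k
  show "0 \<le> x k mod int CARD('p) ^ k" using padic_pos[where 'p='p] by (rule pos_mod_sign)
  show "x k mod int CARD('p) ^ k < int CARD('p) ^ k" using padic_pos[where 'p='p] by (rule pos_mod_bound)
  show "x (Suc k) mod int CARD('p) ^ Suc k mod int CARD('p) ^ k = x k mod int CARD('p) ^ k"
    unfolding padic_mod_mod by (rule assms)
qed

instantiation padic :: (nontriv_card) comm_ring_1
begin

lift_definition zero_padic :: "'a padic" is "\<lambda>_. 0"
  by (simp add: padic_coh_def padic_pos)

lift_definition one_padic :: "'a padic" is "\<lambda>k. 1 mod int CARD('a) ^ k"
  by (rule coh_normalize) simp

lift_definition plus_padic :: "'a padic \<Rightarrow> 'a padic \<Rightarrow> 'a padic"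
  is "\<lambda>x y k. (x k + y k) mod int CARD('a) ^ k"
  by (rule coh_normalize) (metis coh_weak(1) mod_add_eq)

lift_definition times_padic :: "'a padic \<Rightarrow> 'a padic \<Rightarrow> 'a padic"
  is "\<lambda>x y k. (x k * y k) mod int CARD('a) ^ k"
  by (rule coh_normalize) (metis coh_weak(1) mod_mult_eq)

lift_definition uminus_padic :: "'a padic \<Rightarrow> 'a padic"
  is "\<lambda>x k. (- x k) mod int CARD('a) ^ k"
  by (rule coh_normalize) (metis coh_weak(1) mod_minus_eq)

definition minus_padic :: "'a padic \<Rightarrow> 'a padic \<Rightarrow> 'a padic" where
  "minus_padic x y = x + (- y)"

instance
proof
  fix a b c :: "'a padic"
  show "a * b * c = a * (b * c)"
    by transfer (rule ext, metis mod_mult_left_eq mod_mult_right_eq mult.assoc)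
  show "a * b = b * a" by transfer (simp add: mult.commute)
  show "1 * a = a"
    by transfer (rule ext, metis coh_weak(2) mod_mult_left_eq mult_1)
  show "a + b + c = a + (b + c)"
    by transfer (rule ext, metis mod_add_left_eq mod_add_right_eq add.assoc)
  show "a + b = b + a" by transfer (simp add: add.commute)
  show "0 + a = a"
    by transfer (rule ext, metis coh_weak(2) add_0)
  show "- a + a = 0"
    by transfer (rule ext, metis mod_add_left_eq add.left_inverse mod_0)
  show "a - b = a + - b" by (simp add: minus_padic_def)
  show "(a + b) * c = a * c + b * c"
    by transfer (rule ext, metis mod_mult_left_eq mod_add_eq distrib_right)
  show "(0::'a padic) \<noteq> 1"
  proof transfer
    have "1 mod int CARD('a) ^ 1 = 1" using card_gt1[where 'a='a] by simp
    then show "(\<lambda>_. 0::int) \<noteq> (\<lambda>k. 1 mod int CARD('a) ^ k)" by (metis zero_neq_one)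
  qed
qed

end

definition padic_val :: "'p::nontriv_card padic \<Rightarrow> enat" where
  "padic_val x = Sup {enat k | k. (of_nat CARD('p) :: 'p padic) ^ k dvd x}"

section \<open>Evaluation of power series at points of pZ_p (p-adic limits of partial sums)\<close>

definition eval1 :: "'p::nontriv_card padic fps \<Rightarrow> 'p padic \<Rightarrow> 'p padic" where
  "eval1 f a = (THE z. \<forall>k. (of_nat CARD('p) :: 'p padic) ^ k dvd z - (\<Sum>i<k. f $ i * a ^ i))"

text \<open>Two-variable power series: an element phi of R[[X]][[Y]] with coefficient of X^i Y^j
  equal to phi \$ i \$ j.\<close>
definition eval2 :: "'p::nontriv_card padic fps fps \<Rightarrow> 'p padic \<Rightarrow> 'p padic \<Rightarrow> 'p padic" where
  "eval2 \<phi> a b = (THE z. \<forall>k. (of_nat CARD('p) :: 'p padic) ^ k dvd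
       z - (\<Sum>i<k. \<Sum>j<k. \<phi> $ i $ j * a ^ i * b ^ j))"

text \<open>Three-variable series in X, Y, Z: T \$ a \$ b \$ c is the coefficient of X^a Y^b Z^c.\<close>
definition X3 :: "'a::comm_ring_1 fps fps fps" where "X3 = fps_X"
definition Y3 :: "'a::comm_ring_1 fps fps fps" where "Y3 = fps_const fps_X"
definition Z3 :: "'a::comm_ring_1 fps fps fps" where "Z3 = fps_const (fps_const fps_X)"

text \<open>Substitution F(U,V) of three-variable series U, V without constant term into a
  two-variable series F (the sum is finite in each total degree).\<close>
definition subst2_3 :: "'a::comm_ring_1 fps fps \<Rightarrow> 'a fps fps fps \<Rightarrow> 'a fps fps fps \<Rightarrow> 'a fps fps fps" where
  "subst2_3 F U V = Abs_fps (\<lambda>a. Abs_fps (\<lambda>b. Abs_fps (\<lambda>c.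
      \<Sum>i\<le>a+b+c. \<Sum>j\<le>a+b+c. F $ i $ j * ((U ^ i * V ^ j) $ a $ b $ c))))"

definition subst2_1 :: "'a::comm_ring_1 fps fps \<Rightarrow> 'a fps \<Rightarrow> 'a fps \<Rightarrow> 'a fps" where
  "subst2_1 F u v = Abs_fps (\<lambda>a. \<Sum>i\<le>a. \<Sum>j\<le>a. F $ i $ j * ((u ^ i * v ^ j) $ a))"

definition formal_group_law :: "'a::comm_ring_1 fps fps \<Rightarrow> bool" where
  "formal_group_law F \<longleftrightarrow>
     F $ 0 $ 0 = 0 \<and> F $ 1 $ 0 = 1 \<and> F $ 0 $ 1 = 1 \<and>
     (\<forall>i j. F $ i $ j = F $ j $ i) \<and>
     subst2_3 F (subst2_3 F X3 Y3) Z3 = subst2_3 F X3 (subst2_3 F Y3 Z3)"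

primrec fgl_mult :: "'a::comm_ring_1 fps fps \<Rightarrow> nat \<Rightarrow> 'a fps" where
  "fgl_mult F 0 = 0"
| "fgl_mult F (Suc n) = subst2_1 F (fgl_mult F n) fps_X"

definition finite_height :: "'p::nontriv_card padic fps fps \<Rightarrow> bool" where
  "finite_height F \<longleftrightarrow> (\<exists>i. \<not> (of_nat CARD('p) :: 'p padic) dvd (fgl_mult F CARD('p) $ i))"

definition fgl_mult_at :: "'p::nontriv_card padic fps fps \<Rightarrow> nat \<Rightarrow> 'p padic \<Rightarrow> 'p padic" where
  "fgl_mult_at F n a = eval1 (fgl_mult F n) a"

definition is_line :: "(nat \<times> nat) set \<Rightarrow> bool" where
  "is_line L \<longleftrightarrow> (\<exists>a b c :: real. (a, b) \<noteq> (0, 0) \<and> L = {(x, y). a * real x + b * real y = c})"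

end

theory Submission
  imports Defs "HOL-Computational_Algebra.Polynomial" "HOL-Number_Theory.Residues"
begin

abbreviation PP :: "'p::nontriv_card padic" where "PP \<equiv> of_nat CARD('p)"

lemma q_gt1: "1 < int CARD('p::nontriv_card)"
  using card_gt1[where 'a='p] by simp

lemma digits_range: "0 \<le> digits (x::'p::nontriv_card padic) k" "digits x k < int CARD('p) ^ k"
  using digits[of x] by (auto simp: padic_coh_def)

lemma digits_mod: "digits (x::'p::nontriv_card padic) k mod int CARD('p) ^ k = digits x k"
  using digits_range[of x k] by (simp add: mod_pos_pos_trivial)

lemma digits_coh: "j \<le> k \<Longrightarrow> digits (x::'p::nontriv_card padic) k mod int CARD('p) ^ j = digits x j"
proof (induction k)
  case 0 then show ?case using digits_mod[of x 0] by simp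
next
  case (Suc k)
  show ?case
  proof (cases "j = Suc k")
    case True then show ?thesis by (simp only: True digits_mod)
  next
    case False
    then have "j \<le> k" using Suc by simp
    have c: "digits x (Suc k) mod int CARD('p) ^ k = digits x k"
      using digits[of x] by (simp add: padic_coh_def)
    have "int CARD('p) ^ j dvd int CARD('p) ^ k" using \<open>j \<le> k\<close> by (simp add: le_imp_power_dvd)
    then have "digits x (Suc k) mod int CARD('p) ^ j = (digits x (Suc k) mod int CARD('p) ^ k) mod int CARD('p) ^ j"
      by (simp add: mod_mod_cancel)
    also have "\<dots> = digits x j" using c Suc.IH \<open>j \<le> k\<close> by simp
    finally show ?thesis .
  qed
qed

lemma digits_plus: "digits (x + y :: 'p::nontriv_card padic) k = (digits x k + digits y k) mod int CARD('p) ^ k"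
  by (simp add: plus_padic.rep_eq)
lemma digits_times: "digits (x * y :: 'p::nontriv_card padic) k = (digits x k * digits y k) mod int CARD('p) ^ k"
  by (simp add: times_padic.rep_eq)
lemma digits_uminus: "digits (- x :: 'p::nontriv_card padic) k = (- digits x k) mod int CARD('p) ^ k"
  by (simp add: uminus_padic.rep_eq)
lemma digits_minus: "digits (x - y :: 'p::nontriv_card padic) k = (digits x k - digits y k) mod int CARD('p) ^ k"
proof -
  have "digits (x - y) k = digits (x + - y) k" by simp
  also have "\<dots> = (digits x k + (- digits y k) mod int CARD('p) ^ k) mod int CARD('p) ^ k"
    by (simp only: digits_plus digits_uminus)
  also have "\<dots> = (digits x k - digits y k) mod int CARD('p) ^ k"
    by (metis diff_conv_add_uminus mod_add_right_eq)
  finally show ?thesis .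
qed
lemma digits_one: "digits (1 :: 'p::nontriv_card padic) k = 1 mod int CARD('p) ^ k"
  by (simp add: one_padic.rep_eq)
lemma digits_zero: "digits (0 :: 'p::nontriv_card padic) k = 0"
  by (simp add: zero_padic.rep_eq)

lemma digits_of_nat: "digits (of_nat n :: 'p::nontriv_card padic) k = int n mod int CARD('p) ^ k"
proof (induction n)
  case 0 then show ?case by (simp add: digits_zero)
next
  case (Suc n)
  have "digits (of_nat (Suc n) :: 'p padic) k = digits (1 + of_nat n :: 'p padic) k" by simp
  also have "\<dots> = (1 mod int CARD('p) ^ k + int n mod int CARD('p) ^ k) mod int CARD('p) ^ k"
    by (simp add: digits_plus digits_one Suc.IH)
  also have "\<dots> = int (Suc n) mod int CARD('p) ^ k" by (simp add: mod_add_eq add.commute)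
  finally show ?case .
qed

lemma PP_power: "(PP :: 'p::nontriv_card padic) ^ k = of_nat (CARD('p) ^ k)"
  by simp

lemma digits_PP_power: "digits ((PP :: 'p::nontriv_card padic) ^ n) k = int CARD('p) ^ n mod int CARD('p) ^ k"
  unfolding PP_power digits_of_nat by simp

lemma dvd_PP_power_imp: "(PP :: 'p::nontriv_card padic) ^ k dvd z \<Longrightarrow> digits z k = 0"
proof -
  assume "PP ^ k dvd z"
  then obtain w where "z = PP ^ k * w" by blast
  then show ?thesis by (simp add: digits_times digits_PP_power)
qed

lemma digits_zero_imp_dvd:
  assumes z0: "digits (z :: 'p::nontriv_card padic) k = 0"
  shows "(PP :: 'p padic) ^ k dvd z"
proof -
  define q where "q = int CARD('p)"
  have q1: "1 < q" using q_gt1 q_def by simp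
  define d where "d = (\<lambda>j. digits z (j + k))"
  have ddvd: "q ^ k dvd d j" for j
  proof -
    have "d j mod q ^ k = digits z k" unfolding d_def q_def by (rule digits_coh) simp
    then show ?thesis using z0 by (simp add: mod_eq_0_iff_dvd)
  qed
  define w where "w = (\<lambda>j. d j div q ^ k)"
  have dw: "d j = q ^ k * w j" for j using ddvd[of j] unfolding w_def by simp
  have qk: "0 < q ^ k" using q1 by simp
  have coh: "padic_coh TYPE('p) w"
    unfolding padic_coh_def
  proof (intro allI conjI)
    fix j
    have r: "0 \<le> d j" "d j < q ^ (j + k)" unfolding d_def q_def using digits_range by auto
    show "0 \<le> w j" using r qk dw by (simp add: zero_le_mult_iff)
    have "q ^ k * w j < q ^ k * q ^ j" using r dw by (simp add: power_add mult.commute)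
    then show "w j < int CARD('p) ^ j" using qk q_def by simp
    have "d (Suc j) mod q ^ (j + k) = d j" unfolding d_def q_def
      by (rule digits_coh) simp
    then have "q ^ k * (w (Suc j) mod q ^ j) = q ^ k * w j"
      using dw[of "Suc j"] dw[of j] by (simp add: mod_mult_mult1 power_add mult.commute)
    then show "w (Suc j) mod int CARD('p) ^ j = w j" using qk q_def by simp
  qed
  define W :: "'p padic" where "W = Abs_padic w"
  have dW: "digits W = w" unfolding W_def using coh by (simp add: Abs_padic_inverse)
  have "PP ^ k * W = z"
  proof (rule digits_inject[THEN iffD1], rule ext)
    fix j
    show "digits (PP ^ k * W) j = digits z j"
    proof (cases "j \<le> k")
      case True
      have "q ^ j dvd q ^ k" using True by (simp add: le_imp_power_dvd)
      then have "digits (PP ^ k * W) j = 0" unfolding digits_times digits_PP_power q_def[symmetric]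
        by simp
      moreover have "digits z j = 0"
        using digits_coh[of j k z] True z0 by simp
      ultimately show ?thesis by simp
    next
      case False
      then have "q ^ k mod q ^ j = q ^ k" using q1
        by (intro mod_pos_pos_trivial) (auto intro: power_strict_increasing)
      then have "digits (PP ^ k * W) j = (q ^ k * w j) mod q ^ j"
        unfolding digits_times digits_PP_power dW q_def[symmetric] by (simp add: mod_mult_left_eq)
      also have "\<dots> = d j mod q ^ j" using dw by simp
      also have "\<dots> = digits z j" unfolding d_def q_def by (rule digits_coh) simp
      finally show ?thesis .
    qed
  qed
  then show ?thesis by (metis dvd_triv_left)
qed

lemma dvd_PP_power_iff: "(PP :: 'p::nontriv_card padic) ^ k dvd z \<longleftrightarrow> digits z k = 0"
  using dvd_PP_power_imp digits_zero_imp_dvd by blast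

lemma cong_iff_digits: "(PP :: 'p::nontriv_card padic) ^ k dvd x - y \<longleftrightarrow> digits x k = digits y k"
proof -
  define q where "q = int CARD('p)"
  have r: "0 \<le> digits x k" "digits x k < q ^ k" "0 \<le> digits y k" "digits y k < q ^ k"
    using digits_range q_def by auto
  have "PP ^ k dvd x - y \<longleftrightarrow> (digits x k - digits y k) mod q ^ k = 0"
    by (simp add: dvd_PP_power_iff digits_minus q_def)
  also have "\<dots> \<longleftrightarrow> digits x k = digits y k"
  proof
    assume "(digits x k - digits y k) mod q ^ k = 0"
    then have "q ^ k dvd digits x k - digits y k" by (simp add: mod_eq_0_iff_dvd)
    then obtain c where c: "digits x k - digits y k = q ^ k * c" by blast
    have "c = 0"
    proof (rule ccontr)
      assume "c \<noteq> 0"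
      then have "q ^ k \<le> \<bar>q ^ k * c\<bar>" using r
        by (simp add: abs_mult)
      then show False using c r by linarith
    qed
    then show "digits x k = digits y k" using c by simp
  qed simp
  finally show ?thesis .
qed

lemma all_dvd_imp_zero: "(\<And>k. (PP :: 'p::nontriv_card padic) ^ k dvd x) \<Longrightarrow> x = 0"
  by (metis digits_inject digits_zero dvd_PP_power_iff ext)

lemma all_cong_imp_eq: "(\<And>k. (PP :: 'p::nontriv_card padic) ^ k dvd x - y) \<Longrightarrow> x = y"
  using all_dvd_imp_zero[of "x - y"] by simp

lemma padic_complete:
  fixes s :: "nat \<Rightarrow> 'p::nontriv_card padic"
  assumes "\<And>k. PP ^ k dvd s (Suc k) - s k"
  shows "\<exists>z. \<forall>k. PP ^ k dvd z - s k"
proof -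
  define w where "w = (\<lambda>k. digits (s k) k)"
  have coh: "padic_coh TYPE('p) w"
    unfolding padic_coh_def
  proof (intro allI conjI)
    fix k
    show "0 \<le> w k" "w k < int CARD('p) ^ k" unfolding w_def using digits_range by auto
    have "digits (s (Suc k)) (Suc k) mod int CARD('p) ^ k = digits (s (Suc k)) k"
      by (rule digits_coh) simp
    also have "\<dots> = digits (s k) k" using assms[of k] cong_iff_digits by blast
    finally show "w (Suc k) mod int CARD('p) ^ k = w k" unfolding w_def .
  qed
  define z :: "'p padic" where "z = Abs_padic w"
  have "digits z = w" unfolding z_def using coh by (simp add: Abs_padic_inverse)
  then have "\<forall>k. PP ^ k dvd z - s k" by (auto simp: cong_iff_digits w_def)
  then show ?thesis by blast
qed

lemma PP_power_nonzero: "(PP :: 'p::nontriv_card padic) ^ n \<noteq> 0"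
proof
  assume "(PP :: 'p padic) ^ n = 0"
  then have "digits ((PP :: 'p padic) ^ n) (Suc n) = 0" by (simp add: digits_zero)
  moreover have "int CARD('p) ^ n mod int CARD('p) ^ Suc n = int CARD('p) ^ n"
    using q_gt1[where 'p='p] by (intro mod_pos_pos_trivial) auto
  ultimately show False using q_gt1[where 'p='p] by (simp add: digits_PP_power)
qed

lemma PP_nonzero: "(PP :: 'p::nontriv_card padic) \<noteq> 0"
  using PP_power_nonzero[of 1] by simp

lemma not_PP_dvd_one: "\<not> (PP :: 'p::nontriv_card padic) dvd 1"
proof
  assume "(PP :: 'p padic) dvd 1"
  then have "(PP :: 'p padic) ^ 1 dvd 1" by simp
  then have "digits (1 :: 'p padic) 1 = 0" using dvd_PP_power_iff by blast
  then show False using q_gt1[where 'p='p] by (simp add: digits_one)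
qed

lemma PP_dvd_of_nat_iff: "(PP :: 'p::nontriv_card padic) dvd of_nat n \<longleftrightarrow> CARD('p) dvd n"
  using dvd_PP_power_iff[of 1 "of_nat n :: 'p padic"]
  by (simp add: digits_of_nat) (metis of_nat_dvd_iff zmod_int mod_eq_0_iff_dvd of_nat_eq_0_iff)

locale pprime =
  fixes ty :: "'p::nontriv_card itself"
  assumes pr: "prime CARD('p)"
begin

lemma PP_prime:
  assumes "(PP :: 'p padic) dvd x * y" shows "PP dvd x \<or> PP dvd y"
proof -
  define q where "q = int CARD('p)"
  have pq: "prime q" using pr q_def by (simp add: prime_nat_int_transfer)
  have "digits (x * y) 1 = 0" using assms dvd_PP_power_iff[of 1 "x*y"] by simp
  then have "(digits x 1 * digits y 1) mod q = 0" by (simp add: digits_times q_def)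
  then have "q dvd digits x 1 \<or> q dvd digits y 1" using pq by (simp add: mod_eq_0_iff_dvd prime_dvd_mult_iff)
  moreover have "0 \<le> digits x 1" "digits x 1 < q" "0 \<le> digits y 1" "digits y 1 < q"
    using digits_range[of x 1] digits_range[of y 1] q_def by auto
  ultimately have "digits x 1 = 0 \<or> digits y 1 = 0"
    using zdvd_not_zless by (metis le_less)
  then show ?thesis using dvd_PP_power_iff[of 1 x] dvd_PP_power_iff[of 1 y] by auto
qed

lemma not_dvd_mult: "\<not> (PP :: 'p padic) dvd x \<Longrightarrow> \<not> PP dvd y \<Longrightarrow> \<not> PP dvd x * y"
  using PP_prime by blast

lemma geom_inv: "\<exists>g. (1 - (PP :: 'p padic) * t) * g = 1"
proof -
  define s where "s = (\<lambda>K. \<Sum>i<K. ((PP :: 'p padic) * t) ^ i)"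
  have "PP ^ k dvd s (Suc k) - s k" for k
    by (simp add: s_def power_mult_distrib)
  then obtain g where g: "\<forall>k. PP ^ k dvd g - s k" using padic_complete by blast
  have tel0: "(1 - a) * (\<Sum>i<K. a ^ i) = 1 - a ^ K" for a :: "'p padic" and K
    by (rule one_diff_power_eq[symmetric])
  have tel: "(1 - PP * t) * s K = 1 - (PP * t) ^ K" for K
    unfolding s_def by (rule tel0)
  have "PP ^ K dvd (1 - PP * t) * g - 1" for K
  proof -
    have "(1 - PP * t) * g - 1 = (1 - PP * t) * (g - s K) - PP ^ K * t ^ K"
      using tel[of K] by (simp add: algebra_simps power_mult_distrib)
    then show ?thesis using g by (simp add: dvd_diff)
  qed
  then have "(1 - PP * t) * g = 1" by (rule all_cong_imp_eq)
  then show ?thesis by blast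
qed

lemma fermat_padic:
  assumes "\<not> (PP :: 'p padic) dvd x" shows "PP dvd x ^ (CARD('p) - 1) - 1"
proof -
  define q where "q = int CARD('p)"
  define a where "a = nat (digits x 1)"
  have r: "0 \<le> digits x 1" "digits x 1 < q" using digits_range[of x 1] q_def by auto
  have ne: "digits x 1 \<noteq> 0" using assms dvd_PP_power_iff[of 1 x] by auto
  have ad: "int a = digits x 1" using r a_def by simp
  have "\<not> CARD('p) dvd a"
  proof
    assume "CARD('p) dvd a"
    then have "q dvd digits x 1" using ad q_def by (metis of_nat_dvd_iff)
    then show False using r ne zdvd_not_zless by (metis le_less)
  qed
  then have "[a ^ (CARD('p) - 1) = 1] (mod CARD('p))" using pr fermat_theorem by blast
  moreover have "1 mod CARD('p) = 1" using prime_gt_1_nat[OF pr] by simp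
  ultimately have "a ^ (CARD('p) - 1) mod CARD('p) = 1" by (simp add: cong_def)
  then have "int (a ^ (CARD('p) - 1) mod CARD('p)) = 1" by simp
  then have e: "digits x 1 ^ (CARD('p) - 1) mod q = 1"
    unfolding zmod_int of_nat_power ad q_def .
  have dp: "digits (x ^ n) 1 = digits x 1 ^ n mod q" for n
  proof (induction n)
    case 0 then show ?case by (simp add: digits_one q_def)
  next
    case (Suc n)
    then show ?case by (simp add: digits_times q_def mod_mult_right_eq mult.commute)
  qed
  have "digits (x ^ (CARD('p) - 1)) 1 = digits (1::'p padic) 1"
    using e dp q_gt1[where 'p='p] by (simp add: digits_one q_def)
  then show ?thesis using cong_iff_digits[where 'p='p, of 1 "x ^ (CARD('p) - 1)" 1] by simp
qed

lemma unit_inv: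
  assumes "\<not> (PP :: 'p padic) dvd x" shows "\<exists>y. x * y = 1"
proof -
  obtain c where c: "x ^ (CARD('p) - 1) - 1 = PP * c" using fermat_padic[OF assms] by blast
  obtain g where g: "(1 - PP * (- c)) * g = 1" using geom_inv by blast
  have p2: "CARD('p) - 1 = Suc (CARD('p) - 2)" using prime_ge_2_nat[OF pr] by simp
  have "x * (x ^ (CARD('p) - 2) * g) = x ^ (CARD('p) - 1) * g" using p2 by (simp add: mult.assoc)
  also have "x ^ (CARD('p) - 1) = 1 - PP * (- c)" using c by (simp add: algebra_simps)
  finally show ?thesis using g by auto
qed

lemma val_decomp:
  assumes "(x :: 'p padic) \<noteq> 0" shows "\<exists>m u. x = PP ^ m * u \<and> \<not> PP dvd u"
proof -
  have "\<exists>k. \<not> PP ^ k dvd x" using assms all_dvd_imp_zero by blast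
  define k where "k = (LEAST k. \<not> (PP :: 'p padic) ^ k dvd x)"
  have nk: "\<not> PP ^ k dvd x" unfolding k_def by (rule LeastI_ex) fact
  have k0: "k \<noteq> 0" using nk by (metis one_dvd power_0)
  then obtain m where km: "k = Suc m" by (cases k) auto
  have "PP ^ m dvd x" using not_less_Least[of m "\<lambda>k. \<not> (PP :: 'p padic) ^ k dvd x"] km k_def by auto
  then obtain u where u: "x = PP ^ m * u" by blast
  have "\<not> PP dvd u"
  proof
    assume "PP dvd u"
    then have "PP ^ m * PP dvd PP ^ m * u" by (simp add: mult_dvd_mono)
    then have "PP ^ k dvd x" using u km by (simp add: mult.commute)
    then show False using nk by simp
  qed
  then show ?thesis using u by blast
qed

lemma no_zero_div:
  assumes "(x :: 'p padic) * y = 0" shows "x = 0 \<or> y = 0"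
proof (rule ccontr)
  assume "\<not> (x = 0 \<or> y = 0)"
  then obtain m u n w where x: "x = PP ^ m * u" "\<not> PP dvd u" and y: "y = PP ^ n * w" "\<not> PP dvd w"
    using val_decomp by metis
  obtain v where v: "u * w * v = 1" using unit_inv not_dvd_mult x(2) y(2) by blast
  have "PP ^ (m + n) * (u * w) = 0" using assms x y by (simp add: power_add algebra_simps)
  then have "PP ^ (m + n) * (u * w * v) = 0" by (metis mult.assoc mult_zero_left)
  then show False using v PP_power_nonzero by (metis mult_1_right)
qed

lemma mult_cancel_padic: "(a :: 'p padic) \<noteq> 0 \<Longrightarrow> a * b = a * c \<Longrightarrow> b = c"
  using no_zero_div[of a "b - c"] by (simp add: right_diff_distrib)

lemma mult_nonzero_padic: "(a :: 'p padic) \<noteq> 0 \<Longrightarrow> b \<noteq> 0 \<Longrightarrow> a * b \<noteq> 0"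
  using no_zero_div by blast

lemma PP_power_dvd_unit:
  assumes "(PP :: 'p padic) ^ V dvd PP ^ m * u" "\<not> PP dvd u" shows "V \<le> m"
proof (rule ccontr)
  assume "\<not> V \<le> m"
  then have "Suc m \<le> V" by simp
  then have "PP ^ Suc m dvd PP ^ V" by (rule le_imp_power_dvd)
  then have "PP ^ Suc m dvd PP ^ m * u" using assms(1) dvd_trans by blast
  then obtain c where "PP ^ m * u = PP ^ Suc m * c" by blast
  then have "PP ^ m * u = PP ^ m * (PP * c)" by (simp add: algebra_simps)
  then have "u = PP * c" using mult_cancel_padic PP_power_nonzero by blast
  then show False using assms(2) by simp
qed

lemma closed_ideal:
  assumes "\<And>K. \<exists>r. (PP :: 'p padic) ^ K dvd s - d * r" shows "d dvd s"
proof (cases "d = 0")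
  case True
  have "PP ^ K dvd s" for K using assms[of K] True by auto
  then have "s = 0" by (rule all_dvd_imp_zero)
  then show ?thesis by simp
next
  case False
  then obtain m u where du: "d = PP ^ m * u" "\<not> PP dvd u" using val_decomp by blast
  obtain v where v: "u * v = 1" using unit_inv du(2) by blast
  obtain r where "PP ^ m dvd s - d * r" using assms by blast
  then obtain t where t: "s - d * r = PP ^ m * t" by blast
  have "d * (v * t) = PP ^ m * (u * v) * t" using du by (simp add: algebra_simps)
  then have "PP ^ m * t = d * (v * t)" using v by simp
  then have "s = d * (r + v * t)" using t by (simp add: algebra_simps)
  then show ?thesis by simp
qed

end

definition ps1 :: "'p::nontriv_card padic fps \<Rightarrow> 'p padic \<Rightarrow> nat \<Rightarrow> 'p padic" where
  "ps1 f a K = (\<Sum>c<K. f $ c * a ^ c)"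

definition ps2 :: "'p::nontriv_card padic fps fps \<Rightarrow> 'p padic \<Rightarrow> 'p padic \<Rightarrow> nat \<Rightarrow> 'p padic" where
  "ps2 \<phi> a b K = (\<Sum>i<K. \<Sum>j<K. \<phi> $ i $ j * a ^ i * b ^ j)"

lemma cong_mult: "(m::'a::comm_ring_1) dvd x - x' \<Longrightarrow> m dvd y - y' \<Longrightarrow> m dvd x * y - x' * y'"
proof -
  assume "m dvd x - x'" "m dvd y - y'"
  moreover have "x * y - x' * y' = x * (y - y') + (x - x') * y'" by (simp add: algebra_simps)
  ultimately show ?thesis by (simp add: dvd_add)
qed

lemma cong_power: "(m::'a::comm_ring_1) dvd x - x' \<Longrightarrow> m dvd x ^ n - x' ^ n"
  by (induction n) (simp_all add: cong_mult)

lemma cong_sum: "(\<And>i. i \<in> A \<Longrightarrow> (m::'a::comm_ring_1) dvd f i - g i) \<Longrightarrow> m dvd sum f A - sum g A"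
  by (simp add: sum_subtractf[symmetric] dvd_sum)

lemma cong_trans: "(m::'a::comm_ring_1) dvd x - y \<Longrightarrow> m dvd y - z \<Longrightarrow> m dvd x - z"
  using dvd_add[of m "x - y" "y - z"] by simp

lemma cong_sym: "(m::'a::comm_ring_1) dvd x - y \<Longrightarrow> m dvd y - x"
  by (metis dvd_minus_iff minus_diff_eq)

lemma pow_dvd_pow: "(PP :: 'p::nontriv_card padic) dvd a \<Longrightarrow> PP ^ K dvd a ^ K"
  by (simp add: dvd_power_same)

lemma pow_dvd_pow_ge: "(PP :: 'p::nontriv_card padic) dvd a \<Longrightarrow> K \<le> n \<Longrightarrow> PP ^ K dvd a ^ n"
  by (metis dvd_power_same le_imp_power_dvd dvd_trans)

lemma eval1_unique:
  assumes "\<And>K. (PP :: 'p::nontriv_card padic) ^ K dvd z - ps1 f a K"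
  shows "eval1 f a = z"
  unfolding eval1_def
proof (rule the_equality)
  show "\<forall>k. PP ^ k dvd z - (\<Sum>i<k. f $ i * a ^ i)" using assms by (simp add: ps1_def)
  fix y assume "\<forall>k. (PP :: 'p padic) ^ k dvd y - (\<Sum>i<k. f $ i * a ^ i)"
  then have h: "PP ^ k dvd y - ps1 f a k" for k by (simp add: ps1_def)
  have "PP ^ k dvd (y - ps1 f a k) - (z - ps1 f a k)" for k using h[of k] assms[of k] by (rule dvd_diff)
  then have "PP ^ k dvd y - z" for k by simp
  then show "y = z" by (rule all_cong_imp_eq)
qed

lemma eval2_unique:
  assumes "\<And>K. (PP :: 'p::nontriv_card padic) ^ K dvd z - ps2 \<phi> a b K"
  shows "eval2 \<phi> a b = z"
  unfolding eval2_def
proof (rule the_equality)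
  show "\<forall>k. PP ^ k dvd z - (\<Sum>i<k. \<Sum>j<k. \<phi> $ i $ j * a ^ i * b ^ j)" using assms by (simp add: ps2_def)
  fix y assume "\<forall>k. (PP :: 'p padic) ^ k dvd y - (\<Sum>i<k. \<Sum>j<k. \<phi> $ i $ j * a ^ i * b ^ j)"
  then have h: "PP ^ k dvd y - ps2 \<phi> a b k" for k by (simp add: ps2_def)
  have "PP ^ k dvd (y - ps2 \<phi> a b k) - (z - ps2 \<phi> a b k)" for k using h[of k] assms[of k] by (rule dvd_diff)
  then have "PP ^ k dvd y - z" for k by simp
  then show "y = z" by (rule all_cong_imp_eq)
qed

lemma eval1_spec:
  assumes "(PP :: 'p::nontriv_card padic) dvd a"
  shows "PP ^ K dvd eval1 f a - ps1 f a K"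
proof -
  have "PP ^ k dvd ps1 f a (Suc k) - ps1 f a k" for k
    using pow_dvd_pow[OF assms, of k] by (simp add: ps1_def)
  then obtain z where z: "\<forall>k. PP ^ k dvd z - ps1 f a k" using padic_complete[of "ps1 f a"] by blast
  then have "eval1 f a = z" by (intro eval1_unique) auto
  then show ?thesis using z by simp
qed

lemma eval2_spec:
  assumes a: "(PP :: 'p::nontriv_card padic) dvd a" and b: "PP dvd b"
  shows "PP ^ K dvd eval2 \<phi> a b - ps2 \<phi> a b K"
proof -
  have "PP ^ k dvd ps2 \<phi> a b (Suc k) - ps2 \<phi> a b k" for k
  proof -
    have "ps2 \<phi> a b (Suc k) - ps2 \<phi> a b k =
      (\<Sum>i<k. \<phi> $ i $ k * a ^ i * b ^ k) + (\<Sum>j<Suc k. \<phi> $ k $ j * a ^ k * b ^ j)"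
      by (simp add: ps2_def sum.distrib algebra_simps)
    moreover have "PP ^ k dvd (\<Sum>i<k. \<phi> $ i $ k * a ^ i * b ^ k)"
      using pow_dvd_pow[OF b, of k] by (intro dvd_sum) simp
    moreover have "PP ^ k dvd (\<Sum>j<Suc k. \<phi> $ k $ j * a ^ k * b ^ j)"
      using pow_dvd_pow[OF a, of k] by (intro dvd_sum) (simp add: mult.commute mult.left_commute)
    ultimately show ?thesis by (simp add: dvd_add)
  qed
  then obtain z where z: "\<forall>k. PP ^ k dvd z - ps2 \<phi> a b k" using padic_complete[of "ps2 \<phi> a b"] by blast
  then have "eval2 \<phi> a b = z" by (intro eval2_unique) auto
  then show ?thesis using z by simp
qed

lemma ps1_mult:
  assumes a: "(PP :: 'p::nontriv_card padic) dvd a"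
  shows "PP ^ K dvd ps1 (f * g) a K - ps1 f a K * ps1 g a K"
proof -
  define h where "h = (\<lambda>c d. f $ c * g $ d * a ^ (c + d))"
  have A: "ps1 (f * g) a K = (\<Sum>(c, d)\<in>{(c, d). c + d < K}. h c d)"
    unfolding sum.triangle_reindex ps1_def h_def fps_mult_nth
    by (simp add: sum_distrib_right atLeast0AtMost)
  have B: "ps1 f a K * ps1 g a K = (\<Sum>(c, d)\<in>{..<K} \<times> {..<K}. h c d)"
    unfolding ps1_def h_def sum_product sum.cartesian_product
    by (simp add: power_add algebra_simps)
  have sub: "{(c, d). c + d < K} \<subseteq> {..<K} \<times> {..<K}" by auto
  have fin: "finite ({..<K} \<times> {..<K})" by simp
  have "(\<Sum>(c, d)\<in>{..<K} \<times> {..<K}. h c d) - (\<Sum>(c, d)\<in>{(c, d). c + d < K}. h c d)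
        = (\<Sum>(c, d)\<in>{..<K} \<times> {..<K} - {(c, d). c + d < K}. h c d)"
    by (rule sum_diff[OF fin sub, symmetric])
  moreover have "PP ^ K dvd (\<Sum>(c, d)\<in>{..<K} \<times> {..<K} - {(c, d). c + d < K}. h c d)"
  proof (rule dvd_sum)
    fix x assume "x \<in> {..<K} \<times> {..<K} - {(c, d). c + d < K}"
    then obtain c d where x: "x = (c, d)" "K \<le> c + d" by auto
    then show "PP ^ K dvd (case x of (c, d) \<Rightarrow> h c d)"
      using pow_dvd_pow_ge[OF a x(2)] by (simp add: h_def)
  qed
  ultimately have "PP ^ K dvd ps1 f a K * ps1 g a K - ps1 (f * g) a K" using A B by simp
  then show ?thesis by (rule cong_sym)
qed

lemma ps1_power:
  assumes a: "(PP :: 'p::nontriv_card padic) dvd a"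
  shows "PP ^ K dvd ps1 (f ^ n) a K - (ps1 f a K) ^ n"
proof (induction n)
  case 0
  show ?case
  proof (cases K)
    case 0 then show ?thesis by simp
  next
    case (Suc K')
    have "ps1 1 a K = 1" unfolding ps1_def Suc by (simp add: sum.lessThan_Suc_shift del: sum.lessThan_Suc)
    then show ?thesis by simp
  qed
next
  case (Suc n)
  have "PP ^ K dvd ps1 (f * f ^ n) a K - ps1 f a K * ps1 (f ^ n) a K" by (rule ps1_mult[OF a])
  moreover have "PP ^ K dvd ps1 f a K * ps1 (f ^ n) a K - ps1 f a K * ps1 f a K ^ n"
    using Suc.IH by (intro cong_mult) simp_all
  ultimately have "PP ^ K dvd ps1 (f * f ^ n) a K - ps1 f a K * ps1 f a K ^ n" by (rule cong_trans)
  then show ?case by (simp only: power_Suc)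
qed

lemma ps1_X_power:
  assumes a: "(PP :: 'p::nontriv_card padic) dvd a"
  shows "PP ^ K dvd ps1 (fps_X ^ j) a K - a ^ j"
proof -
  have "ps1 (fps_X ^ j) a K = (\<Sum>c<K. if c = j then a ^ c else 0)"
    unfolding ps1_def fps_X_power_nth by (intro sum.cong) auto
  also have "\<dots> = (if j < K then a ^ j else 0)" by (simp add: sum.delta)
  finally show ?thesis using pow_dvd_pow_ge[OF a, of K j] by (auto simp: dvd_minus_iff)
qed

lemma eval1_dvd: "(PP :: 'p::nontriv_card padic) dvd a \<Longrightarrow> f $ 0 = 0 \<Longrightarrow> PP dvd eval1 f a"
  using eval1_spec[of a 1 f] by (simp add: ps1_def)

lemma eval2_dvd: "(PP :: 'p::nontriv_card padic) dvd a \<Longrightarrow> PP dvd b \<Longrightarrow> \<phi> $ 0 $ 0 = 0 \<Longrightarrow> PP dvd eval2 \<phi> a b"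
  using eval2_spec[of a b 1 \<phi>] by (simp add: ps2_def)

lemma subst_compat:
  assumes a: "(PP :: 'p::nontriv_card padic) dvd a" and u0: "u $ 0 = 0"
  shows "eval1 (subst2_1 F u fps_X) a = eval2 F (eval1 u a) a"
proof (rule eval1_unique)
  fix K
  define U where "U = eval1 u a"
  have U: "PP dvd U" unfolding U_def using eval1_dvd[OF a u0] .
  define S where "S = ps1 u a K"
  have US: "PP ^ K dvd U - S" unfolding U_def S_def by (rule eval1_spec[OF a])
  have h1: "PP ^ K dvd eval2 F U a - ps2 F U a K" by (rule eval2_spec[OF U a])
  have h2: "PP ^ K dvd ps2 F U a K - (\<Sum>i<K. \<Sum>j<K. F $ i $ j * S ^ i * a ^ j)"
    unfolding ps2_def using US by (intro cong_sum cong_mult cong_power) simp_all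
  have h3: "PP ^ K dvd (\<Sum>i<K. \<Sum>j<K. F $ i $ j * S ^ i * a ^ j)
     - (\<Sum>i<K. \<Sum>j<K. F $ i $ j * ps1 (u ^ i * fps_X ^ j) a K)"
  proof (intro cong_sum)
    fix i j
    have "PP ^ K dvd S ^ i * a ^ j - ps1 (u ^ i) a K * ps1 (fps_X ^ j) a K"
      using ps1_power[OF a, of K u i] ps1_X_power[OF a, of K j]
      by (intro cong_mult) (simp_all add: S_def cong_sym)
    moreover have "PP ^ K dvd ps1 (u ^ i) a K * ps1 (fps_X ^ j) a K - ps1 (u ^ i * fps_X ^ j) a K"
      by (rule cong_sym[OF ps1_mult[OF a]])
    ultimately have "PP ^ K dvd S ^ i * a ^ j - ps1 (u ^ i * fps_X ^ j) a K" by (rule cong_trans)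
    then have "PP ^ K dvd F $ i $ j * (S ^ i * a ^ j) - F $ i $ j * ps1 (u ^ i * fps_X ^ j) a K"
      by (intro cong_mult) simp_all
    then show "PP ^ K dvd F $ i $ j * S ^ i * a ^ j - F $ i $ j * ps1 (u ^ i * fps_X ^ j) a K"
      by (simp add: mult.assoc)
  qed
  have h4: "(\<Sum>i<K. \<Sum>j<K. F $ i $ j * ps1 (u ^ i * fps_X ^ j) a K) = ps1 (subst2_1 F u fps_X) a K"
  proof -
    have "(\<Sum>i<K. \<Sum>j<K. F $ i $ j * ps1 (u ^ i * fps_X ^ j) a K)
        = (\<Sum>c<K. (\<Sum>i<K. \<Sum>j<K. F $ i $ j * (u ^ i * fps_X ^ j) $ c) * a ^ c)"
    proof -
      have "(\<Sum>i<K. \<Sum>j<K. F $ i $ j * ps1 (u ^ i * fps_X ^ j) a K)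
          = (\<Sum>i<K. \<Sum>j<K. \<Sum>c<K. F $ i $ j * ((u ^ i * fps_X ^ j) $ c * a ^ c))"
        by (simp only: ps1_def sum_distrib_left)
      also have "\<dots> = (\<Sum>i<K. \<Sum>c<K. \<Sum>j<K. F $ i $ j * ((u ^ i * fps_X ^ j) $ c * a ^ c))"
        by (rule sum.cong[OF refl], rule sum.swap)
      also have "\<dots> = (\<Sum>c<K. \<Sum>i<K. \<Sum>j<K. F $ i $ j * ((u ^ i * fps_X ^ j) $ c * a ^ c))"
        by (rule sum.swap)
      also have "\<dots> = (\<Sum>c<K. (\<Sum>i<K. \<Sum>j<K. F $ i $ j * (u ^ i * fps_X ^ j) $ c) * a ^ c)"
        by (simp only: sum_distrib_right mult.assoc)
      finally show ?thesis .
    qed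
    also have "\<dots> = (\<Sum>c<K. (\<Sum>i\<le>c. \<Sum>j\<le>c. F $ i $ j * (u ^ i * fps_X ^ j) $ c) * a ^ c)"
    proof (rule sum.cong[OF refl])
      fix c assume c: "c \<in> {..<K}"
      have z0: "(u ^ i) $ n = 0" if "n < i" for n i using startsby_zero_power_prefix[OF u0] that by blast
      have z: "(u ^ i * fps_X ^ j) $ c = 0" if "c < i + j" for i j
        using that z0[of "c - j" i] by (simp add: fps_X_power_mult_right_nth)
      have "(\<Sum>i<K. \<Sum>j<K. F $ i $ j * (u ^ i * fps_X ^ j) $ c) = (\<Sum>i\<le>c. \<Sum>j<K. F $ i $ j * (u ^ i * fps_X ^ j) $ c)"
        using c z by (intro sum.mono_neutral_right) (auto intro!: sum.neutral)
      also have "\<dots> = (\<Sum>i\<le>c. \<Sum>j\<le>c. F $ i $ j * (u ^ i * fps_X ^ j) $ c)"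
        using c z by (intro sum.cong refl sum.mono_neutral_right) auto
      finally show "(\<Sum>i<K. \<Sum>j<K. F $ i $ j * (u ^ i * fps_X ^ j) $ c) * a ^ c = (\<Sum>i\<le>c. \<Sum>j\<le>c. F $ i $ j * (u ^ i * fps_X ^ j) $ c) * a ^ c" by simp
    qed
    also have "\<dots> = ps1 (subst2_1 F u fps_X) a K"
      by (simp only: ps1_def subst2_1_def fps_nth_Abs_fps)
    finally show ?thesis .
  qed
  have "PP ^ K dvd eval2 F U a - (\<Sum>i<K. \<Sum>j<K. F $ i $ j * ps1 (u ^ i * fps_X ^ j) a K)"
    using cong_trans[OF cong_trans[OF h1 h2] h3] .
  then show "PP ^ K dvd eval2 F (eval1 u a) a - ps1 (subst2_1 F u fps_X) a K"
    unfolding U_def h4 .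
qed

definition rho :: "'a::comm_ring_1 fps fps fps \<Rightarrow> 'a fps" where
  "rho T = Abs_fps (\<lambda>a. T $ a $ 0 $ 0)"

lemma rho_nth: "rho T $ a = T $ a $ 0 $ 0" by (simp add: rho_def)

lemma rho_mult: "rho (S * T) = rho S * rho T"
proof (rule fps_ext)
  fix a
  show "rho (S * T) $ a = (rho S * rho T) $ a"
    by (simp add: rho_nth fps_mult_nth fps_sum_nth)
qed

lemma rho_one: "rho 1 = 1"
  by (rule fps_ext) (simp add: rho_nth)

lemma rho_power: "rho (T ^ n) = rho T ^ n"
  by (induction n) (simp_all add: rho_one rho_mult)

lemma rho_X3: "rho (X3 :: 'a::comm_ring_1 fps fps fps) = fps_X"
  by (rule fps_ext) (simp add: rho_nth X3_def fps_X_nth)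

lemma rho_Y3: "rho (Y3 :: 'a::comm_ring_1 fps fps fps) = 0"
  by (rule fps_ext) (simp add: rho_nth Y3_def fps_X_nth)

lemma rho_Z3: "rho (Z3 :: 'a::comm_ring_1 fps fps fps) = 0"
  by (rule fps_ext) (simp add: rho_nth Z3_def fps_X_nth)

lemma rho_subst2_3: "rho (subst2_3 F U V) $ a = (\<Sum>i\<le>a. \<Sum>j\<le>a. F $ i $ j * (rho U ^ i * rho V ^ j) $ a)"
  by (simp add: rho_nth subst2_3_def rho_power[symmetric] rho_mult[symmetric])

lemma sum_zero_power: "(\<Sum>j\<le>a. f j * ((g::'a::comm_ring_1 fps) * 0 ^ j) $ n) = f 0 * g $ n"
  by (simp add: sum.atMost_shift power_0_left del: sum.atMost_Suc)

lemma sum_delta_mult: "(\<Sum>i\<le>(a::nat). f i * (if a = i then (1::'a::comm_ring_1) else 0)) = f a"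
proof -
  have "(\<Sum>i\<le>(a::nat). f i * (if a = i then (1::'a) else 0)) = (\<Sum>i\<le>a. if a = i then f i else 0)"
    by (intro sum.cong refl) auto
  also have "\<dots> = f a" by (subst sum.delta') simp_all
  finally show ?thesis .
qed

lemma fgl_F_X0:
  fixes F :: "'a::comm_ring_1 fps fps"
  assumes fgl: "formal_group_law F"
  shows "F $ i $ 0 = (if i = 1 then 1 else 0)"
proof -
  have F00: "F $ 0 $ 0 = 0" and F10: "F $ 1 $ 0 = 1" using fgl by (auto simp: formal_group_law_def)
  have assoc: "subst2_3 F (subst2_3 F X3 Y3) Z3 = subst2_3 F X3 (subst2_3 F Y3 Z3)"
    using fgl by (simp add: formal_group_law_def)
  define g :: "'a fps" where "g = Abs_fps (\<lambda>a. F $ a $ 0)"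
  have gn: "g $ a = F $ a $ 0" for a by (simp add: g_def)
  have rU: "rho (subst2_3 F X3 Y3) = g"
  proof (rule fps_ext)
    fix a
    have "rho (subst2_3 F X3 Y3) $ a = (\<Sum>i\<le>a. F $ i $ 0 * (fps_X ^ i) $ a)"
      unfolding rho_subst2_3 rho_X3 rho_Y3
      by (intro sum.cong refl) (simp add: sum_zero_power)
    also have "\<dots> = F $ a $ 0" by (simp add: fps_X_power_nth sum_delta_mult)
    finally show "rho (subst2_3 F X3 Y3) $ a = g $ a" by (simp add: gn)
  qed
  have rW: "rho (subst2_3 F Y3 Z3) = 0"
  proof (rule fps_ext)
    fix a
    have "rho (subst2_3 F Y3 Z3) $ a = (\<Sum>i\<le>a. F $ i $ 0 * (0 ^ i) $ a)"
      unfolding rho_subst2_3 rho_Z3 rho_Y3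
      by (intro sum.cong refl) (simp add: sum_zero_power)
    also have "\<dots> = 0" by (simp add: sum.atMost_shift power_0_left F00 del: sum.atMost_Suc)
    finally show "rho (subst2_3 F Y3 Z3) $ a = 0 $ a" by simp
  qed
  have eq: "(\<Sum>i\<le>a. g $ i * (g ^ i) $ a) = g $ a" for a
  proof -
    have "rho (subst2_3 F (subst2_3 F X3 Y3) Z3) $ a = (\<Sum>i\<le>a. F $ i $ 0 * (g ^ i) $ a)"
      unfolding rho_subst2_3 rU rho_Z3 by (intro sum.cong refl) (simp add: sum_zero_power)
    moreover have "rho (subst2_3 F X3 (subst2_3 F Y3 Z3)) $ a = (\<Sum>i\<le>a. F $ i $ 0 * (fps_X ^ i) $ a)"
      unfolding rho_subst2_3 rW rho_X3 by (intro sum.cong refl) (simp add: sum_zero_power)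
    moreover have "(\<Sum>i\<le>a. F $ i $ 0 * (fps_X ^ i) $ a) = g $ a" by (simp add: fps_X_power_nth gn sum_delta_mult)
    ultimately show ?thesis using assoc by (simp add: gn)
  qed
  have g0: "g $ 0 = 0" using F00 by (simp add: gn)
  have g1: "g $ 1 = 1" using F10 by (simp add: gn)
  have main: "g $ a = fps_X $ a" for a
  proof (induction a rule: less_induct)
    case (less a)
    show ?case
    proof (cases "a < 2")
      case True
      then have "a = 0 \<or> a = 1" by auto
      then show ?thesis using g0 g1 by (auto simp: fps_X_nth)
    next
      case False
      then have a2: "2 \<le> a" by simp
      have pw: "\<forall>n < a + i - 1. (g ^ i) $ n = (fps_X ^ i) $ n" if "1 \<le> i" for i
        using that
      proof (induction i rule: dec_induct)
        case base
        show ?case using less.IH by auto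
      next
        case (step i)
        show ?case
        proof (intro allI impI)
          fix n assume n: "n < a + Suc i - 1"
          have "(g * g ^ i) $ n = (fps_X * fps_X ^ i) $ n"
            unfolding fps_mult_nth
          proof (intro sum.cong refl)
            fix m assume m: "m \<in> {0..n}"
            show "g $ m * (g ^ i) $ (n - m) = fps_X $ m * (fps_X ^ i) $ (n - m)"
            proof (cases "m < a")
              case True
              then have "g $ m = fps_X $ m" using less.IH by simp
              moreover have "m = 0 \<or> (g ^ i) $ (n - m) = (fps_X ^ i) $ (n - m)"
              proof (cases "m = 0")
                case False
                then have "n - m < a + i - 1" using n step.hyps m by auto
                then show ?thesis using step.IH by blast
              qed simp
              ultimately show ?thesis using g0 by (auto simp: fps_X_nth)
            next
              case False
              then have "n - m < i" using n step.hyps by auto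
              then have "(g ^ i) $ (n - m) = 0" "(fps_X ^ i) $ (n - m) = 0"
                using startsby_zero_power_prefix[OF g0] by (auto simp: fps_X_power_nth)
              then show ?thesis by (metis mult_zero_right)
            qed
          qed
          then show "(g ^ Suc i) $ n = (fps_X ^ Suc i) $ n" by simp
        qed
      qed
      have gi: "(g ^ i) $ a = (if i = a then 1 else 0)" if "2 \<le> i" for i
        using pw[of i] that a2 by (simp add: fps_X_power_nth)
      have "(\<Sum>i\<le>a. g $ i * (g ^ i) $ a) = (\<Sum>i\<in>{0, 1, a}. g $ i * (g ^ i) $ a)"
      proof (rule sum.mono_neutral_right)
        show "\<forall>i\<in>{..a} - {0, 1, a}. g $ i * (g ^ i) $ a = 0" using gi by auto
      qed (use a2 in auto)
      also have "\<dots> = g $ a + g $ a" using a2 g0 g1 gi[of a] by simp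
      finally have "g $ a + g $ a = g $ a" using eq[of a] by simp
      then have "g $ a = 0" by simp
      then show ?thesis using a2 by (simp add: fps_X_nth)
    qed
  qed
  show ?thesis using main[of i] by (simp add: gn fps_X_nth)
qed

lemma fgl_F_0X:
  fixes F :: "'a::comm_ring_1 fps fps"
  assumes fgl: "formal_group_law F"
  shows "F $ 0 $ j = (if j = 1 then 1 else 0)"
  using fgl_F_X0[OF fgl, of j] fgl by (simp add: formal_group_law_def)

lemma fgl_mult_0: "(fgl_mult F n) $ 0 = 0" if "F $ 0 $ 0 = 0"
  by (cases n) (simp_all add: subst2_1_def that)

context pprime begin

lemma T_diff:
  fixes F :: "'p padic fps fps"
  assumes fgl: "formal_group_law F" and a: "PP dvd a" and b: "PP dvd b" and c: "PP dvd c"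
  shows "\<exists>r. eval2 F a c - eval2 F b c = (a - b) * (1 + F $ 1 $ 1 * c) + PP * c * (a - b) * r"
proof -
  define d where "d = PP * c * (a - b)"
  define s where "s = eval2 F a c - eval2 F b c - (a - b) * (1 + F $ 1 $ 1 * c)"
  define e where "e = (\<lambda>i j. if i = (1::nat) then (if j = (0::nat) then a - b else if j = 1 then F $ 1 $ 1 * (a - b) * c else 0) else 0)"
  have Fi0: "F $ i $ 0 = (if i = 1 then 1 else 0)" for i using fgl_F_X0[OF fgl] .
  have key: "d dvd F $ i $ j * (a ^ i - b ^ i) * c ^ j - e i j" for i j
  proof -
    consider "i = 0" | "i \<ge> 1" "j = 0" | "i = 1" "j = 1" | "i = 1" "j \<ge> 2" | "i \<ge> 2" "j \<ge> 1"
      by linarith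
    then show ?thesis
    proof cases
      case 1 then show ?thesis by (simp add: e_def)
    next
      case 2 then show ?thesis by (simp add: e_def Fi0)
    next
      case 3 then show ?thesis by (simp add: e_def algebra_simps)
    next
      case 4
      then obtain j' where j: "j = Suc (Suc j')" by (metis add_2_eq_Suc le_Suc_ex)
      obtain c' where c': "c = PP * c'" using c by blast
      have "F $ i $ j * (a ^ i - b ^ i) * c ^ j = d * (F $ 1 $ j * c' * c ^ j')"
        using 4 j c' by (simp add: d_def algebra_simps)
      then show ?thesis using 4 by (simp add: e_def)
    next
      case 5
      then obtain j' where j: "j = Suc j'" by (cases j) auto
      have "PP dvd (\<Sum>k<i. b ^ (i - Suc k) * a ^ k)"
      proof (rule dvd_sum)
        fix k assume "k \<in> {..<i}"
        show "PP dvd b ^ (i - Suc k) * a ^ k"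
        proof (cases k)
          case 0
          then have "i - Suc k \<noteq> 0" using 5 by simp
          then have "b dvd b ^ (i - Suc k)" by (intro dvd_power) simp
          then have "PP dvd b ^ (i - Suc k)" using b dvd_trans by blast
          then show ?thesis by (rule dvd_mult2)
        next
          case (Suc k')
          then show ?thesis using a by (simp add: dvd_mult)
        qed
      qed
      then obtain S where S: "(\<Sum>k<i. b ^ (i - Suc k) * a ^ k) = PP * S" by blast
      have "F $ i $ j * (a ^ i - b ^ i) * c ^ j = d * (F $ i $ j * S * c ^ j')"
        unfolding power_diff_sumr2 S using j by (simp add: d_def algebra_simps)
      then show ?thesis using 5 by (simp add: e_def)
    qed
  qed
  have "\<exists>r. PP ^ K dvd s - d * r" for K
  proof -
    define K' where "K' = K + 2"
    have diff: "ps2 F a c K' - ps2 F b c K' = (\<Sum>i<K'. \<Sum>j<K'. F $ i $ j * (a ^ i - b ^ i) * c ^ j)"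
      unfolding ps2_def sum_subtractf[symmetric] by (simp add: algebra_simps)
    have esum: "(\<Sum>i<K'. \<Sum>j<K'. e i j) = (a - b) * (1 + F $ 1 $ 1 * c)"
    proof -
      have "(\<Sum>i<K'. \<Sum>j<K'. e i j) = (\<Sum>i<K'. if i = 1 then (\<Sum>j<K'. e 1 j) else 0)"
        by (intro sum.cong refl) (simp add: e_def)
      also have "\<dots> = (\<Sum>j<K'. e 1 j)" by (simp add: sum.delta K'_def)
      also have "\<dots> = (\<Sum>j<K'. (if j = 0 then a - b else 0) + (if j = 1 then F $ 1 $ 1 * (a - b) * c else 0))"
        unfolding e_def by (intro sum.cong refl) auto
      also have "\<dots> = (a - b) + F $ 1 $ 1 * (a - b) * c"
        unfolding sum.distrib by (simp add: K'_def)
      finally show ?thesis by (simp add: algebra_simps)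
    qed
    have "d dvd (\<Sum>i<K'. \<Sum>j<K'. F $ i $ j * (a ^ i - b ^ i) * c ^ j - e i j)"
      using key by (intro dvd_sum) auto
    moreover have "(\<Sum>i<K'. \<Sum>j<K'. F $ i $ j * (a ^ i - b ^ i) * c ^ j - e i j)
       = ps2 F a c K' - ps2 F b c K' - (a - b) * (1 + F $ 1 $ 1 * c)"
      unfolding diff esum[symmetric] by (simp only: sum_subtractf)
    ultimately have "d dvd ps2 F a c K' - ps2 F b c K' - (a - b) * (1 + F $ 1 $ 1 * c)" by simp
    then obtain r where r: "ps2 F a c K' - ps2 F b c K' - (a - b) * (1 + F $ 1 $ 1 * c) = d * r" by blast
    have "s - d * r = (eval2 F a c - ps2 F a c K') - (eval2 F b c - ps2 F b c K')"
      using r by (simp add: s_def algebra_simps)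
    moreover have "PP ^ K' dvd (eval2 F a c - ps2 F a c K') - (eval2 F b c - ps2 F b c K')"
      using eval2_spec[OF a c] eval2_spec[OF b c] by (rule dvd_diff)
    moreover have "PP ^ K dvd PP ^ K'" by (rule le_imp_power_dvd) (simp add: K'_def)
    ultimately show ?thesis by (metis dvd_trans)
  qed
  then have "d dvd s" by (rule closed_ideal)
  then obtain r where "s = d * r" by blast
  then show ?thesis by (auto simp: s_def d_def algebra_simps)
qed

end

locale orbit = pprime ty for ty :: "'p::nontriv_card itself" +
  fixes F :: "'p padic fps fps" and \<alpha> :: "'p padic"
  assumes fgl: "formal_group_law F" and adv: "PP dvd \<alpha>"
begin

definition T :: "'p padic \<Rightarrow> 'p padic" where "T y = eval2 F y \<alpha>"
definition x :: "nat \<Rightarrow> 'p padic" where "x n = fgl_mult_at F n \<alpha>"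
definition D :: "'p padic" where "D = 1 + F $ 1 $ 1 * \<alpha>"
definition Q :: "'p padic" where "Q = PP * \<alpha>"

lemma F00: "F $ 0 $ 0 = 0" using fgl by (simp add: formal_group_law_def)

lemma x0: "x 0 = 0"
  unfolding x_def fgl_mult_at_def by (rule eval1_unique) (simp add: ps1_def)

lemma xSuc: "x (Suc n) = T (x n)"
  unfolding x_def fgl_mult_at_def T_def
  using subst_compat[OF adv fgl_mult_0[OF F00]] by simp

lemma T_dvd: "PP dvd y \<Longrightarrow> PP dvd T y"
  unfolding T_def using eval2_dvd[OF _ adv F00] by blast

lemma Tn_dvd: "PP dvd y \<Longrightarrow> PP dvd (T ^^ n) y"
  by (induction n) (simp_all add: T_dvd)

lemma x_dvd: "PP dvd x n"
  by (induction n) (simp_all add: x0 xSuc T_dvd)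

lemma x_add: "x (n + k) = (T ^^ n) (x k)"
  by (induction n) (simp_all add: xSuc)

lemma iter_diff:
  assumes a: "PP dvd a" and b: "PP dvd b"
  shows "\<exists>r. (T ^^ n) a - (T ^^ n) b = (a - b) * (D ^ n + Q * r)"
proof (induction n)
  case 0 then show ?case by (intro exI[of _ 0]) simp
next
  case (Suc n)
  then obtain r where r: "(T ^^ n) a - (T ^^ n) b = (a - b) * (D ^ n + Q * r)" by blast
  obtain r1 where r1: "T ((T ^^ n) a) - T ((T ^^ n) b) = ((T ^^ n) a - (T ^^ n) b) * D + Q * ((T ^^ n) a - (T ^^ n) b) * r1"
    using T_diff[OF fgl Tn_dvd[OF a] Tn_dvd[OF b] adv] unfolding T_def D_def Q_def by blast
  have "(T ^^ Suc n) a - (T ^^ Suc n) b = (a - b) * (D ^ Suc n + Q * (r * D + D ^ n * r1 + Q * r * r1))"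
    using r1 unfolding r by (simp add: algebra_simps)
  then show ?case by blast
qed

lemma Dp: "\<exists>s. D ^ CARD('p) = 1 + Q * s"
proof -
  obtain a' where a': "\<alpha> = PP * a'" using adv by blast
  have "\<alpha> dvd D ^ k - 1 ^ k" for k by (rule cong_power) (simp add: D_def)
  then have "\<alpha> dvd (\<Sum>k<CARD('p). D ^ k - 1)" by (intro dvd_sum) simp
  then obtain t where t: "(\<Sum>k<CARD('p). D ^ k - 1) = \<alpha> * t" by blast
  have "(\<Sum>k<CARD('p). D ^ k) = PP + \<alpha> * t"
    using t by (simp add: sum_subtractf sum_constant algebra_simps)
  then have "D ^ CARD('p) - 1 = F $ 1 $ 1 * \<alpha> * (PP + \<alpha> * t)"
    unfolding power_diff_1_eq by (simp add: D_def)
  also have "\<dots> = F $ 1 $ 1 * (\<alpha> * PP) + F $ 1 $ 1 * (\<alpha> * \<alpha>) * t"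
    by (simp add: algebra_simps)
  also have "\<alpha> * \<alpha> = \<alpha> * (PP * a')" using a' by simp
  also have "F $ 1 $ 1 * (\<alpha> * PP) + F $ 1 $ 1 * (\<alpha> * (PP * a')) * t = Q * (F $ 1 $ 1 + F $ 1 $ 1 * a' * t)"
    by (simp add: Q_def algebra_simps)
  finally show ?thesis by (intro exI[of _ "F $ 1 $ 1 + F $ 1 $ 1 * a' * t"]) (simp add: algebra_simps)
qed

lemma z_diff: "\<exists>r. x (CARD('p) * (n + k)) - x (CARD('p) * n) = x (CARD('p) * k) * (1 + Q * r)"
proof -
  define p where "p = CARD('p)"
  obtain r where r: "(T ^^ (p * n)) (x (p * k)) - (T ^^ (p * n)) 0 = (x (p * k) - 0) * (D ^ (p * n) + Q * r)"
    using iter_diff[OF x_dvd[of "p * k"] dvd_0_right, of "p * n"] by auto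
  obtain s where s: "D ^ p = 1 + Q * s" using Dp p_def by blast
  have "Q dvd (1 + Q * s) ^ n - 1 ^ n" by (rule cong_power) simp
  then obtain s' where s': "(1 + Q * s) ^ n = 1 + Q * s'" by (metis dvd_def diff_eq_eq add.commute power_one)
  have "D ^ (p * n) = 1 + Q * s'" by (simp add: power_mult s s')
  moreover have "x (p * (n + k)) = (T ^^ (p * n)) (x (p * k))" using x_add[of "p * n" "p * k"] by (simp add: algebra_simps)
  moreover have "x (p * n) = (T ^^ (p * n)) 0" using x_add[of "p * n" 0] by (simp add: x0)
  ultimately have "x (p * (n + k)) - x (p * n) = x (p * k) * (1 + Q * (s' + r))"
    using r by (simp add: algebra_simps)
  then show ?thesis unfolding p_def by blast
qed

end

lemma digits_dvd_of_dvd: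
  assumes "(PP :: 'p::nontriv_card padic) ^ E dvd x" "E \<le> V"
  shows "int CARD('p) ^ E dvd digits x V"
proof -
  define q where "q = int CARD('p)"
  obtain y where y: "x = PP ^ E * y" using assms(1) by blast
  have qEV: "q ^ E dvd q ^ V" using assms(2) by (simp add: le_imp_power_dvd)
  have "q ^ E dvd q ^ E mod q ^ V" using qEV by (simp add: dvd_mod)
  then have "q ^ E dvd (q ^ E mod q ^ V) * digits y V" by simp
  then have "q ^ E dvd ((q ^ E mod q ^ V) * digits y V) mod q ^ V" using qEV by (simp add: dvd_mod)
  then show ?thesis unfolding y digits_times digits_PP_power q_def .
qed

locale zseq = pprime ty for ty :: "'p::nontriv_card itself" +
  fixes z :: "nat \<Rightarrow> 'p padic" and \<alpha> :: "'p padic"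
  assumes adv: "PP dvd \<alpha>" and z0: "z 0 = 0"
    and zdiff: "\<And>n k. \<exists>r. z (n + k) - z n = z k * (1 + PP * \<alpha> * r)"
    and zdvd: "\<And>n. PP dvd z n"
begin

lemma Zmul: "\<exists>r. z (j * k) = z k * (of_nat j + PP * \<alpha> * r)"
proof (induction j)
  case 0 then show ?case using z0 by (intro exI[of _ 0]) simp
next
  case (Suc j)
  then obtain r where r: "z (j * k) = z k * (of_nat j + PP * \<alpha> * r)" by blast
  obtain r1 where r1: "z (j * k + k) - z (j * k) = z k * (1 + PP * \<alpha> * r1)" using zdiff by blast
  have "Suc j * k = j * k + k" by simp
  then have "z (Suc j * k) = z (j * k) + z k * (1 + PP * \<alpha> * r1)"
    using r1 by (metis diff_add_cancel add.commute)
  also have "\<dots> = z k * (of_nat (Suc j) + PP * \<alpha> * (r + r1))"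
    unfolding r by (simp add: algebra_simps)
  finally have "z (Suc j * k) = z k * (of_nat (Suc j) + PP * \<alpha> * (r + r1))" .
  then show ?case by blast
qed

lemma Ztors: "z 1 = 0 \<Longrightarrow> z n = 0"
  using Zmul[of n 1] by auto

lemma unit1: "\<not> PP dvd 1 + \<alpha> * r"
proof
  assume "PP dvd 1 + \<alpha> * r"
  moreover have "PP dvd \<alpha> * r" using adv by simp
  ultimately have "PP dvd (1 + \<alpha> * r) - \<alpha> * r" by (rule dvd_diff)
  then show False using not_PP_dvd_one[where 'p='p] by simp
qed

lemma unit2: "\<not> CARD('p) dvd m \<Longrightarrow> \<not> PP dvd of_nat m + PP * \<alpha> * r"
proof
  assume "\<not> CARD('p) dvd m" "PP dvd of_nat m + PP * \<alpha> * r"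
  moreover have "PP dvd PP * \<alpha> * r" by simp
  ultimately have "PP dvd (of_nat m + PP * \<alpha> * r) - PP * \<alpha> * r" by (intro dvd_diff) simp_all
  then show False using \<open>\<not> CARD('p) dvd m\<close> PP_dvd_of_nat_iff[where 'p='p] by simp
qed

lemma unit_cancel_dvd:
  fixes w :: "'p padic"
  assumes "m dvd a * w" "\<not> PP dvd w" shows "m dvd a"
proof -
  obtain v where "w * v = 1" using unit_inv assms(2) by blast
  then have "a = a * w * v" by (simp add: mult.assoc)
  then show ?thesis using assms(1) by (metis dvd_mult2)
qed

lemma Zp_step: "\<exists>r. z (CARD('p) * k) = z k * PP * (1 + \<alpha> * r)"
proof -
  obtain r where "z (CARD('p) * k) = z k * (of_nat CARD('p) + PP * \<alpha> * r)" using Zmul by blast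
  then have "z (CARD('p) * k) = z k * PP * (1 + \<alpha> * r)" by (simp add: algebra_simps)
  then show ?thesis by blast
qed

context
  fixes E u0 assumes z1: "z 1 = PP ^ E * u0" and u0: "\<not> PP dvd u0"
begin

lemma Zlow: "0 < k \<Longrightarrow> k < CARD('p) ^ M \<Longrightarrow> \<not> PP ^ (E + M) dvd z k"
proof (induction M arbitrary: k)
  case 0 then show ?case by simp
next
  case (Suc M)
  show ?case
  proof (cases "CARD('p) dvd k")
    case True
    then obtain k' where k: "k = CARD('p) * k'" by blast
    have k': "0 < k'" "k' < CARD('p) ^ M" using Suc.prems k by auto
    obtain r where r: "z k = z k' * PP * (1 + \<alpha> * r)" using Zp_step k by blast
    show ?thesis
    proof
      assume "PP ^ (E + Suc M) dvd z k"
      then obtain c where "z k' * PP * (1 + \<alpha> * r) = PP * PP ^ (E + M) * c" using r by (auto elim!: dvdE)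
      then have "PP * (z k' * (1 + \<alpha> * r)) = PP * (PP ^ (E + M) * c)" by (simp add: algebra_simps)
      then have "z k' * (1 + \<alpha> * r) = PP ^ (E + M) * c" using mult_cancel_padic PP_nonzero by blast
      then have "PP ^ (E + M) dvd z k' * (1 + \<alpha> * r)" by simp
      then have "PP ^ (E + M) dvd z k'" using unit_cancel_dvd unit1 by blast
      then show False using Suc.IH k' by blast
    qed
  next
    case False
    obtain r where r: "z (k * 1) = z 1 * (of_nat k + PP * \<alpha> * r)" using Zmul by blast
    have w: "\<not> PP dvd u0 * (of_nat k + PP * \<alpha> * r)" using not_dvd_mult u0 unit2[OF False] by blast
    show ?thesis
    proof
      assume "PP ^ (E + Suc M) dvd z k"
      then have "PP ^ (E + Suc M) dvd PP ^ E * (u0 * (of_nat k + PP * \<alpha> * r))" using r z1 by (simp add: mult.assoc)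
      then have "E + Suc M \<le> E" using PP_power_dvd_unit w by blast
      then show False by simp
    qed
  qed
qed

lemma Zpp: "\<exists>u. z (CARD('p) ^ m) = PP ^ (E + m) * u"
proof (induction m)
  case 0 then show ?case using z1 by auto
next
  case (Suc m)
  then obtain u where u: "z (CARD('p) ^ m) = PP ^ (E + m) * u" by blast
  obtain r where "z (CARD('p) * CARD('p) ^ m) = z (CARD('p) ^ m) * PP * (1 + \<alpha> * r)" using Zp_step by blast
  then have "z (CARD('p) ^ Suc m) = PP ^ (E + Suc m) * (u * (1 + \<alpha> * r))" using u by (simp add: algebra_simps)
  then show ?case by blast
qed

lemma Zper: "PP ^ (E + m) dvd z (n + CARD('p) ^ m * j) - z n"
proof -
  obtain r where r: "z (n + CARD('p) ^ m * j) - z n = z (CARD('p) ^ m * j) * (1 + PP * \<alpha> * r)" using zdiff by blast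
  obtain r' where r': "z (j * CARD('p) ^ m) = z (CARD('p) ^ m) * (of_nat j + PP * \<alpha> * r')" using Zmul by blast
  obtain u where u: "z (CARD('p) ^ m) = PP ^ (E + m) * u" using Zpp by blast
  show ?thesis unfolding r using r' u by (simp add: mult.commute[of j] mult.assoc)
qed

lemma Zdistinct: "n \<noteq> n' \<Longrightarrow> z n \<noteq> z n'"
proof -
  have main: "z n \<noteq> z n'" if "n < n'" for n n'
  proof -
    define k where "k = n' - n"
    have k: "0 < k" "n' = n + k" using that k_def by auto
    obtain r where r: "z (n + k) - z n = z k * (1 + PP * \<alpha> * r)" using zdiff by blast
    have "k < 2 ^ k" by (rule less_exp)
    also have "(2::nat) ^ k \<le> CARD('p) ^ k" using card_gt1[where 'a='p] by (intro power_mono) auto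
    finally have "k < CARD('p) ^ k" .
    then have "z k \<noteq> 0" using Zlow[OF k(1)] by fastforce
    moreover have "1 + PP * \<alpha> * r \<noteq> 0" using unit1[of "PP * r"] by (auto simp: algebra_simps)
    ultimately have "z (n + k) - z n \<noteq> 0" using r mult_nonzero_padic by simp
    then show ?thesis using k by simp
  qed
  assume "n \<noteq> n'"
  then show ?thesis using main[of n n'] main[of n' n] by (cases "n < n'") auto
qed

lemma Zball_aux:
  assumes t: "PP ^ E dvd t" and V: "E \<le> V"
  shows "\<exists>n. n \<ge> M0 \<and> PP ^ V dvd z n - t"
proof -
  define q where "q = int CARD('p)"
  have q1: "1 < q" using q_gt1 q_def by simp
  define m where "m = V - E"
  define N where "N = CARD('p) ^ m"
  have Vm: "V = E + m" using V m_def by simp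
  define f where "f = (\<lambda>n. digits (z n) V)"
  have inj: "inj_on f {..<N}"
  proof (rule inj_onI)
    have main: False if "n < n'" "n' < N" "f n = f n'" for n n'
    proof -
      define k where "k = n' - n"
      have k: "0 < k" "n' = n + k" "k < CARD('p) ^ m" using that k_def N_def by auto
      obtain r where r: "z (n + k) - z n = z k * (1 + PP * \<alpha> * r)" using zdiff by blast
      have "PP ^ V dvd z n' - z n" using that(3) cong_iff_digits f_def by metis
      then have "PP ^ V dvd z k * (1 + \<alpha> * (PP * r))" using r k by (simp add: algebra_simps)
      then have "PP ^ V dvd z k" using unit_cancel_dvd unit1 by blast
      then show False using Zlow[OF k(1) k(3)] Vm by simp
    qed
    fix n n' assume "n \<in> {..<N}" "n' \<in> {..<N}" "f n = f n'"
    then show "n = n'" using main[of n n'] main[of n' n] by (cases "n < n'") (auto simp: not_less_iff_gr_or_eq)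
  qed
  define B where "B = {r. 0 \<le> r \<and> r < q ^ V \<and> q ^ E dvd r}"
  have B: "B = (\<lambda>s. q ^ E * s) ` {0..<q ^ m}"
  proof (intro Set.set_eqI iffI)
    fix r assume "r \<in> B"
    then obtain s where s: "r = q ^ E * s" "0 \<le> r" "r < q ^ V" unfolding B_def by auto
    have "0 < q ^ E" using q1 by simp
    then have "0 \<le> s" using s by (simp add: zero_le_mult_iff)
    moreover have "s < q ^ m" using s q1 Vm by (simp add: power_add)
    ultimately show "r \<in> (\<lambda>s. q ^ E * s) ` {0..<q ^ m}" using s by auto
  next
    fix r assume "r \<in> (\<lambda>s. q ^ E * s) ` {0..<q ^ m}"
    then obtain s where s: "r = q ^ E * s" "0 \<le> s" "s < q ^ m" by (meson atLeastLessThan_iff imageE)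
    have "q ^ E * s < q ^ E * q ^ m" using s q1 by simp
    then show "r \<in> B" using s q1 Vm unfolding B_def by (simp add: power_add)
  qed
  have finB: "finite B" unfolding B by simp
  have cardB: "card B = N"
  proof -
    have "inj_on (\<lambda>s. q ^ E * s) {0..<q ^ m}" using q1 by (intro inj_onI) simp
    then have "card B = card {0..<q ^ m}" unfolding B by (rule card_image)
    also have "\<dots> = N" unfolding N_def q_def by (simp add: nat_power_eq)
    finally show ?thesis .
  qed
  have sub: "f ` {..<N} \<subseteq> B"
  proof
    fix r assume "r \<in> f ` {..<N}"
    then obtain n where n: "r = digits (z n) V" unfolding f_def by auto
    obtain c where "z (n * 1) = z 1 * (of_nat n + PP * \<alpha> * c)" using Zmul by blast
    then have "PP ^ E dvd z n" using z1 by simp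
    then have "q ^ E dvd r" unfolding n q_def by (rule digits_dvd_of_dvd) (rule V)
    then show "r \<in> B" using digits_range[of "z n" V] n q_def B_def by auto
  qed
  have eq: "f ` {..<N} = B"
    using card_subset_eq[OF finB sub] card_image[OF inj] cardB by simp
  have "digits t V \<in> B" using digits_range[of t V] digits_dvd_of_dvd[OF t V] q_def B_def by auto
  then obtain n where n: "n < N" "f n = digits t V" using eq by (metis imageE lessThan_iff)
  have c1: "PP ^ V dvd z n - t" using n(2) cong_iff_digits f_def by metis
  have c2: "PP ^ V dvd z (n + N * M0) - z n" using Zper[of m n M0] Vm N_def by simp
  have "PP ^ V dvd z (n + N * M0) - t" using cong_trans[OF c2 c1] .
  moreover have "n + N * M0 \<ge> M0"
  proof -
    have "0 < N" unfolding N_def using card_gt1[where 'a='p] by simp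
    then have "M0 \<le> N * M0" by simp
    then show ?thesis by linarith
  qed
  ultimately show ?thesis by blast
qed

lemma Zball:
  assumes t: "PP ^ E dvd t"
  shows "\<exists>n. n \<ge> M0 \<and> PP ^ V dvd z n - t"
proof -
  obtain n where n: "n \<ge> M0" "PP ^ max V E dvd z n - t" using Zball_aux[OF t, of "max V E" M0] by auto
  moreover have "PP ^ V dvd PP ^ max V E" by (rule le_imp_power_dvd) simp
  ultimately show ?thesis using dvd_trans by blast
qed

end

end

lemma line_bounded:
  fixes A :: "nat \<Rightarrow> nat" and q :: nat
  assumes A: "\<And>k. k * k \<le> A k" and q: "1 \<le> q" and l: "is_line l"
  shows "finite {k. (A k, q * k) \<in> l}"
proof -
  obtain a b c :: real where ab: "(a, b) \<noteq> (0, 0)" and l: "l = {(x, y). a * real x + b * real y = c}"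
    using l unfolding is_line_def by blast
  define R where "R = (\<bar>c\<bar> + \<bar>b\<bar> * real q) / \<bar>a\<bar> + \<bar>c\<bar> / \<bar>b\<bar> + 1"
  have bound: "real k \<le> R" if k: "(A k, q * k) \<in> l" for k
  proof -
    have eq: "a * real (A k) + b * (real q * real k) = c" using k l by simp
    show ?thesis
    proof (cases "a = 0")
      case True
      then have b0: "b \<noteq> 0" using ab by simp
      have e2: "b * (real q * real k) = c" using eq True by simp
      have "\<bar>c\<bar> = \<bar>b\<bar> * \<bar>real q * real k\<bar>" unfolding e2[symmetric] by (rule abs_mult)
      then have "\<bar>b\<bar> * (real q * real k) = \<bar>c\<bar>" by simp
      moreover have "real k \<le> real q * real k" using q by (simp add: mult_le_cancel_right1)
      ultimately have "\<bar>b\<bar> * real k \<le> \<bar>c\<bar>" using b0 by (metis abs_ge_zero mult_left_mono order_trans)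
      then have "real k \<le> \<bar>c\<bar> / \<bar>b\<bar>" using b0 by (simp add: field_simps)
      moreover have "0 \<le> (\<bar>c\<bar> + \<bar>b\<bar> * real q) / \<bar>a\<bar>" by simp
      ultimately show ?thesis unfolding R_def by linarith
    next
      case False
      have e3: "c - b * (real q * real k) = a * real (A k)" using eq by simp
      have "\<bar>a\<bar> * real (A k) = \<bar>c - b * (real q * real k)\<bar>" unfolding e3 by (simp add: abs_mult)
      also have "\<dots> \<le> \<bar>c\<bar> + \<bar>b * (real q * real k)\<bar>" by (rule abs_triangle_ineq4)
      also have "\<bar>b * (real q * real k)\<bar> = \<bar>b\<bar> * real q * real k" by (simp add: abs_mult)
      finally have h: "\<bar>a\<bar> * real (A k) \<le> \<bar>c\<bar> + \<bar>b\<bar> * real q * real k" .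
      have "real k * real k \<le> real (A k)" using A[of k] by (metis of_nat_le_iff of_nat_mult)
      then have h2: "\<bar>a\<bar> * (real k * real k) \<le> \<bar>c\<bar> + \<bar>b\<bar> * real q * real k"
        using h False by (meson abs_ge_zero mult_left_mono order_trans)
      show ?thesis
      proof (cases "k = 0")
        case True then show ?thesis unfolding R_def by (simp add: add_nonneg_nonneg)
      next
        case False
        then have k1: "1 \<le> real k" by simp
        have "\<bar>c\<bar> \<le> \<bar>c\<bar> * real k" using k1 by (simp add: mult_le_cancel_left1)
        then have "(\<bar>a\<bar> * real k) * real k \<le> (\<bar>c\<bar> + \<bar>b\<bar> * real q) * real k"
          using h2 by (simp add: algebra_simps)
        then have "\<bar>a\<bar> * real k \<le> \<bar>c\<bar> + \<bar>b\<bar> * real q" using k1 by simp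
        then have "real k \<le> (\<bar>c\<bar> + \<bar>b\<bar> * real q) / \<bar>a\<bar>" using \<open>a \<noteq> 0\<close> by (simp add: field_simps)
        moreover have "0 \<le> \<bar>c\<bar> / \<bar>b\<bar>" by simp
        ultimately show ?thesis unfolding R_def by linarith
      qed
    qed
  qed
  have "{k. (A k, q * k) \<in> l} \<subseteq> {..nat \<lceil>R\<rceil>}"
  proof
    fix k assume "k \<in> {k. (A k, q * k) \<in> l}"
    then have "real k \<le> R" using bound by simp
    then show "k \<in> {..nat \<lceil>R\<rceil>}" by (simp add: le_nat_iff le_ceiling_iff)
  qed
  then show ?thesis by (rule finite_subset) simp
qed

lemma not_in_lines:
  fixes A :: "nat \<Rightarrow> nat" and q :: nat
  assumes A: "\<And>k. k * k \<le> A k" and q: "1 \<le> q"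
  shows "infinite (range (\<lambda>k. (A k, q * k)))"
    and "\<not> (\<exists>\<L>. finite \<L> \<and> (\<forall>L \<in> \<L>. is_line L) \<and> range (\<lambda>k. (A k, q * k)) \<subseteq> \<Union>\<L>)"
proof -
  have inj: "inj (\<lambda>k. (A k, q * k))" using q by (intro injI) auto
  show "infinite (range (\<lambda>k. (A k, q * k)))" using inj by (simp add: finite_image_iff)
  show "\<not> (\<exists>\<L>. finite \<L> \<and> (\<forall>L \<in> \<L>. is_line L) \<and> range (\<lambda>k. (A k, q * k)) \<subseteq> \<Union>\<L>)"
  proof
    assume "\<exists>\<L>. finite \<L> \<and> (\<forall>L \<in> \<L>. is_line L) \<and> range (\<lambda>k. (A k, q * k)) \<subseteq> \<Union>\<L>"
    then obtain \<L> where L: "finite \<L>" "\<forall>L \<in> \<L>. is_line L" "range (\<lambda>k. (A k, q * k)) \<subseteq> \<Union>\<L>" by blast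
    have "UNIV \<subseteq> (\<Union>L\<in>\<L>. {k. (A k, q * k) \<in> L})" using L(3) by blast
    moreover have "finite (\<Union>L\<in>\<L>. {k. (A k, q * k) \<in> L})"
      using L(1,2) line_bounded[OF A q] by blast
    ultimately have "finite (UNIV :: nat set)" by (rule finite_subset)
    then show False by simp
  qed
qed

primrec Nn :: "(nat \<Rightarrow> 'a::comm_ring_1) \<Rightarrow> nat \<Rightarrow> 'a poly" where
  "Nn b 0 = 1"
| "Nn b (Suc k) = Nn b k * [:- b k, 1:]"

lemma poly_Nn_Suc: "poly (Nn b (Suc k)) x = poly (Nn b k) x * (x - b k)"
  by (simp add: algebra_simps)

lemma Nn_vanish: "j < k \<Longrightarrow> poly (Nn b k) (b j) = 0"
  by (induction k) (auto simp: less_Suc_eq)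

lemma coeff_lin: "poly.coeff ((p :: 'a::comm_ring_1 poly) * [:- c, 1:]) i = - c * poly.coeff p i + (if i = 0 then 0 else poly.coeff p (i - 1))"
  by (cases i) (simp_all add: mult_pCons_right coeff_pCons algebra_simps)

lemma coeff_Nn_dvd:
  assumes b: "\<And>j. (PP :: 'p::nontriv_card padic) dvd b j"
  shows "PP ^ (k - i) dvd poly.coeff (Nn b k) i"
proof (induction k arbitrary: i)
  case 0
  then show ?case by (cases i) simp_all
next
  case (Suc k)
  have t1: "PP ^ (Suc k - i) dvd - b k * poly.coeff (Nn b k) i"
  proof -
    have "PP * PP ^ (k - i) dvd b k * poly.coeff (Nn b k) i" using b Suc.IH by (rule mult_dvd_mono)
    moreover have "PP ^ (Suc k - i) dvd PP ^ Suc (k - i)" by (rule le_imp_power_dvd) simp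
    then have "PP ^ (Suc k - i) dvd PP * PP ^ (k - i)" by simp
    ultimately have "PP ^ (Suc k - i) dvd b k * poly.coeff (Nn b k) i" using dvd_trans by blast
    then show ?thesis by simp
  qed
  have t2: "PP ^ (Suc k - i) dvd (if i = 0 then 0 else poly.coeff (Nn b k) (i - 1))"
  proof (cases i)
    case (Suc i') then show ?thesis using Suc.IH[of i'] by simp
  qed simp
  show ?case unfolding Nn.simps coeff_lin using t1 t2 by (rule dvd_add)
qed

context pprime begin

lemma Nn_nonzero: "(\<And>j. j < k \<Longrightarrow> x \<noteq> b j) \<Longrightarrow> poly (Nn b k) (x :: 'p padic) \<noteq> 0"
proof (induction k)
  case 0 then show ?case by simp
next
  case (Suc k)
  then have "poly (Nn b k) x \<noteq> 0" "x - b k \<noteq> 0" by auto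
  then show ?case unfolding poly_Nn_Suc by (rule mult_nonzero_padic)
qed

lemma eval2_X_0: "eval2 (fps_X :: 'p padic fps fps) 0 b = 0"
proof (rule eval2_unique)
  fix K
  have "ps2 (fps_X :: 'p padic fps fps) 0 b K = 0" unfolding ps2_def
  proof (intro sum.neutral ballI)
    fix i j show "fps_X $ i $ j * 0 ^ i * b ^ j = (0 :: 'p padic)"
      by (cases "i = 1") (simp_all add: fps_X_nth)
  qed
  then show "PP ^ K dvd 0 - ps2 fps_X 0 b K" by simp
qed

lemma eval2_cX_0: "eval2 (fps_const (fps_X :: 'p padic fps)) a 0 = 0"
proof (rule eval2_unique)
  fix K
  have "ps2 (fps_const (fps_X :: 'p padic fps)) a 0 K = 0" unfolding ps2_def
  proof (intro sum.neutral ballI)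
    fix i j show "fps_const fps_X $ i $ j * a ^ i * 0 ^ j = (0 :: 'p padic)"
      by (cases "i = 0"; cases "j = 1") (simp_all add: fps_X_nth)
  qed
  then show "PP ^ K dvd 0 - ps2 (fps_const fps_X) a 0 K" by simp
qed

end

context pprime begin

lemma main_result:
  fixes F :: "'p padic fps fps" and \<alpha>1 \<alpha>2 :: "'p padic"
  assumes fgl: "formal_group_law F" and a1: "PP dvd \<alpha>1" and a2: "PP dvd \<alpha>2"
  shows "\<exists>\<phi> :: 'p padic fps fps. \<phi> \<noteq> 0 \<and>
           (\<exists>S :: (nat \<times> nat) set. infinite S \<and>
              (\<forall>(n, m) \<in> S. eval2 \<phi> (fgl_mult_at F n \<alpha>1) (fgl_mult_at F m \<alpha>2) = 0) \<and>
              \<not> (\<exists>\<L>. finite \<L> \<and> (\<forall>L \<in> \<L>. is_line L) \<and> S \<subseteq> \<Union>\<L>))"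
proof -
  interpret o1: orbit ty F \<alpha>1 by unfold_locales (rule fgl, rule a1)
  interpret o2: orbit ty F \<alpha>2 by unfold_locales (rule fgl, rule a2)
  define p where "p = CARD('p)"
  have p1: "1 \<le> p" using card_gt1[where 'a='p] p_def by simp
  define z where "z = (\<lambda>n. o1.x (p * n))"
  define w where "w = (\<lambda>n. o2.x (p * n))"
  interpret z1: zseq ty z \<alpha>1
  proof
    show "PP dvd \<alpha>1" by (rule a1)
    show "z 0 = 0" by (simp add: z_def o1.x0)
    show "\<exists>r. z (n + k) - z n = z k * (1 + PP * \<alpha>1 * r)" for n k
      using o1.z_diff[of n k] by (simp add: z_def p_def o1.Q_def)
    show "PP dvd z n" for n by (simp add: z_def o1.x_dvd)
  qed
  interpret w1: zseq ty w \<alpha>2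
  proof
    show "PP dvd \<alpha>2" by (rule a2)
    show "w 0 = 0" by (simp add: w_def o2.x0)
    show "\<exists>r. w (n + k) - w n = w k * (1 + PP * \<alpha>2 * r)" for n k
      using o2.z_diff[of n k] by (simp add: w_def p_def o2.Q_def)
    show "PP dvd w n" for n by (simp add: w_def o2.x_dvd)
  qed
  have zx: "fgl_mult_at F (p * n) \<alpha>1 = z n" for n by (simp add: z_def o1.x_def)
  have wx: "fgl_mult_at F (p * n) \<alpha>2 = w n" for n by (simp add: w_def o2.x_def)
  consider (tz) "z 1 = 0" | (tw) "w 1 = 0" | (main) "z 1 \<noteq> 0" "w 1 \<noteq> 0" by blast
  then show ?thesis
  proof cases
    case tz
    define S where "S = range (\<lambda>k. (p * (k * k), 1 * k))"
    have A: "k * k \<le> p * (k * k)" for k using p1 by simp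
    have "infinite S" unfolding S_def by (rule not_in_lines(1)[OF A]) simp
    moreover have "\<not> (\<exists>\<L>. finite \<L> \<and> (\<forall>L \<in> \<L>. is_line L) \<and> S \<subseteq> \<Union>\<L>)"
      unfolding S_def by (rule not_in_lines(2)[OF A]) simp
    moreover have "\<forall>(n, m) \<in> S. eval2 fps_X (fgl_mult_at F n \<alpha>1) (fgl_mult_at F m \<alpha>2) = 0"
    proof
      fix nm assume "nm \<in> S"
      then obtain k where "nm = (p * (k * k), k)" unfolding S_def by auto
      moreover have "z (k * k) = 0" using z1.Ztors[OF tz] .
      ultimately show "case nm of (n, m) \<Rightarrow> eval2 fps_X (fgl_mult_at F n \<alpha>1) (fgl_mult_at F m \<alpha>2) = 0"
        using zx eval2_X_0 by simp
    qed
    moreover have "(fps_X :: 'p padic fps fps) \<noteq> 0" by simp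
    ultimately show ?thesis by blast
  next
    case tw
    define S where "S = range (\<lambda>k. (k * k, p * k))"
    have A: "k * k \<le> k * (k::nat)" for k by simp
    have "infinite S" unfolding S_def by (rule not_in_lines(1)[OF A]) (rule p1)
    moreover have "\<not> (\<exists>\<L>. finite \<L> \<and> (\<forall>L \<in> \<L>. is_line L) \<and> S \<subseteq> \<Union>\<L>)"
      unfolding S_def by (rule not_in_lines(2)[OF A]) (rule p1)
    moreover have "\<forall>(n, m) \<in> S. eval2 (fps_const fps_X) (fgl_mult_at F n \<alpha>1) (fgl_mult_at F m \<alpha>2) = 0"
    proof
      fix nm assume "nm \<in> S"
      then obtain k where "nm = (k * k, p * k)" unfolding S_def by auto
      moreover have "w k = 0" using w1.Ztors[OF tw] .
      ultimately show "case nm of (n, m) \<Rightarrow> eval2 (fps_const fps_X) (fgl_mult_at F n \<alpha>1) (fgl_mult_at F m \<alpha>2) = 0"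
        using wx eval2_cX_0 by simp
    qed
    moreover have "(fps_const (fps_X :: 'p padic fps)) \<noteq> 0" by simp
    ultimately show ?thesis by blast
  next
    case main
    obtain E u0 where zE: "z 1 = PP ^ E * u0" "\<not> PP dvd u0" using val_decomp main(1) by blast
    obtain E2 u2 where wE: "w 1 = PP ^ E2 * u2" "\<not> PP dvd u2" using val_decomp main(2) by blast
    have E1: "1 \<le> E"
    proof (rule ccontr)
      assume "\<not> 1 \<le> E"
      then have "E = 0" by simp
      then have "z 1 = u0" using zE by simp
      then show False using zE(2) z1.zdvd[of 1] by simp
    qed
    define b where "b = w"
    have bd: "PP dvd b j" for j unfolding b_def by (rule w1.zdvd)
    have bdist: "j \<noteq> k \<Longrightarrow> b j \<noteq> b k" for j k unfolding b_def by (rule w1.Zdistinct[OF wE])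
    define N where "N = Nn b"
    define Pinv where "Pinv = (\<lambda>k (x :: 'p padic poly \<times> (nat \<Rightarrow> nat)).
       \<forall>j\<le>k. j * j \<le> snd x j \<and> z (snd x j) = PP ^ E * poly (fst x) (b j))"
    define Rel where "Rel = (\<lambda>k (x :: 'p padic poly \<times> (nat \<Rightarrow> nat)) y.
       (\<exists>c. fst y = fst x + Polynomial.smult c (N (Suc k))) \<and> (\<forall>j\<le>k. snd y j = snd x j))"
    have base: "\<exists>x. Pinv 0 x"
      by (rule exI[of _ "(0, \<lambda>_. 0)"]) (simp add: Pinv_def z1.z0)
    have step: "\<exists>y. Pinv (Suc k) y \<and> Rel k x y" if Px: "Pinv k x" for k x
    proof -
      obtain G ns where x: "x = (G, ns)" by (cases x)
      define k' where "k' = Suc k"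
      have nz: "poly (N k') (b k') \<noteq> 0" unfolding N_def
        by (rule Nn_nonzero) (use bdist in \<open>auto simp: k'_def\<close>)
      define d where "d = PP ^ E * poly (N k') (b k')"
      have d0: "d \<noteq> 0" unfolding d_def using mult_nonzero_padic[OF PP_power_nonzero nz] .
      obtain m u where du: "d = PP ^ m * u" "\<not> PP dvd u" using val_decomp d0 by blast
      obtain v where uv: "u * v = 1" using unit_inv du(2) by blast
      define t where "t = PP ^ E * poly G (b k')"
      have tE: "PP ^ E dvd t" unfolding t_def by simp
      obtain n where n: "n \<ge> k' * k'" "PP ^ m dvd z n - t" using z1.Zball[OF zE tE] by blast
      obtain q' where q': "z n - t = PP ^ m * q'" using n(2) by blast
      define c where "c = q' * v"
      define G' where "G' = G + Polynomial.smult c (N k')"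
      define ns' where "ns' = ns(k' := n)"
      have "Pinv k' (G', ns')"
        unfolding Pinv_def
      proof (intro allI impI)
        fix j assume j: "j \<le> k'"
        show "j * j \<le> snd (G', ns') j \<and> z (snd (G', ns') j) = PP ^ E * poly (fst (G', ns')) (b j)"
        proof (cases "j = k'")
          case True
          have "c * d = PP ^ m * q' * (u * v)" unfolding c_def du by (simp add: algebra_simps)
          then have "c * d = PP ^ m * q'" using uv by simp
          then have "z n = t + c * d" using q' by (simp add: algebra_simps)
          also have "\<dots> = PP ^ E * poly G' (b k')" unfolding t_def d_def G'_def by (simp add: algebra_simps)
          finally show ?thesis using True n(1) by (simp add: ns'_def)
        next
          case False
          then have jk: "j \<le> k" using j k'_def by simp
          have "poly (N k') (b j) = 0" unfolding N_def using jk k'_def by (intro Nn_vanish) simp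
          then have "poly G' (b j) = poly G (b j)" by (simp add: G'_def)
          moreover have "ns' j = ns j" using False by (simp add: ns'_def)
          ultimately show ?thesis using Px jk x by (simp add: Pinv_def)
        qed
      qed
      moreover have "Rel k (G, ns) (G', ns')"
        unfolding Rel_def using k'_def by (auto simp: G'_def ns'_def)
      ultimately show ?thesis using x k'_def by blast
    qed
    obtain f where f: "\<forall>k. Pinv k (f k) \<and> Rel k (f k) (f (Suc k))"
      using dependent_nat_choice[of Pinv Rel] base step by blast
    define Gk where "Gk = (\<lambda>k. fst (f k))"
    define nsk where "nsk = (\<lambda>k. snd (f k))"
    have stab: "nsk k j = nsk j j" if "j \<le> k" for j k
      using that
    proof (induction k rule: dec_induct)
      case base then show ?case by simp
    next
      case (step k)
      then show ?case using f unfolding Rel_def nsk_def by auto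
    qed
    define nk where "nk = (\<lambda>k. nsk k k)"
    have nk_sq: "k * k \<le> nk k" for k using f unfolding Pinv_def nk_def nsk_def by auto
    have nk_val: "z (nk k) = PP ^ E * poly (Gk L) (b k)" if "k \<le> L" for k L
    proof -
      have "Pinv L (f L)" using f by blast
      then have "z (nsk L k) = PP ^ E * poly (Gk L) (b k)" using that unfolding Pinv_def nsk_def Gk_def by blast
      then show ?thesis using stab[OF that] unfolding nk_def by simp
    qed
    have cdiff: "PP ^ (Suc L - i) dvd poly.coeff (Gk (Suc L)) i - poly.coeff (Gk L) i" for L i
    proof -
      obtain c where "Gk (Suc L) = Gk L + Polynomial.smult c (N (Suc L))"
        using f unfolding Rel_def Gk_def by blast
      then have "poly.coeff (Gk (Suc L)) i - poly.coeff (Gk L) i = c * poly.coeff (N (Suc L)) i" by simp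
      moreover have "PP ^ (Suc L - i) dvd poly.coeff (N (Suc L)) i" unfolding N_def by (rule coeff_Nn_dvd[OF bd])
      ultimately show ?thesis by simp
    qed
    have "\<forall>i. \<exists>l. \<forall>K. PP ^ K dvd l - poly.coeff (Gk (K + i)) i"
    proof
      fix i
      have "PP ^ K dvd poly.coeff (Gk (Suc K + i)) i - poly.coeff (Gk (K + i)) i" for K
      proof -
        have "PP ^ (Suc (K + i) - i) dvd poly.coeff (Gk (Suc (K + i))) i - poly.coeff (Gk (K + i)) i" by (rule cdiff)
        moreover have "PP ^ K dvd PP ^ (Suc (K + i) - i)" by (rule le_imp_power_dvd) simp
        ultimately have "PP ^ K dvd poly.coeff (Gk (Suc (K + i))) i - poly.coeff (Gk (K + i)) i"
          by (rule dvd_trans[rotated])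
        then show ?thesis by simp
      qed
      then show "\<exists>l. \<forall>K. PP ^ K dvd l - poly.coeff (Gk (K + i)) i"
        using padic_complete[of "\<lambda>K. poly.coeff (Gk (K + i)) i"] by simp
    qed
    then obtain l where l: "\<And>i K. PP ^ K dvd l i - poly.coeff (Gk (K + i)) i" by (metis choice)
    have lL: "PP ^ K dvd l j - poly.coeff (Gk L) j" if "K + j \<le> L" for K j L
    proof -
      have "PP ^ (L - j) dvd l j - poly.coeff (Gk (L - j + j)) j" by (rule l)
      moreover have "L - j + j = L" using that by simp
      moreover have "PP ^ K dvd PP ^ (L - j)" by (rule le_imp_power_dvd) (use that in simp)
      ultimately show ?thesis using dvd_trans by metis
    qed
    define \<phi> :: "'p padic fps fps" where "\<phi> = Abs_fps (\<lambda>i. if i = 0 then - (fps_const (PP ^ E) * Abs_fps l) else if i = 1 then 1 else 0)"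
    have \<phi>0: "\<phi> $ 0 $ j = - (PP ^ E * l j)" for j by (simp add: \<phi>_def)
    have \<phi>1: "\<phi> $ Suc 0 $ j = (if j = 0 then 1 else 0)" for j by (simp add: \<phi>_def)
    have \<phi>2: "\<phi> $ (Suc (Suc i)) $ j = 0" for i j by (simp add: \<phi>_def)
    have \<phi>nz: "\<phi> \<noteq> 0"
    proof
      assume "\<phi> = 0"
      then have "\<phi> $ 1 $ 0 = 0" by simp
      then show False using \<phi>1[of 0] by simp
    qed
    have ev: "eval2 \<phi> (z (nk k)) (b k) = 0" for k
    proof (rule eval2_unique)
      fix K
      define a where "a = z (nk k)"
      define bb where "bb = b k"
      have bbd: "PP dvd bb" unfolding bb_def by (rule bd)
      have g0: "(\<Sum>j<K. \<phi> $ 0 $ j * a ^ 0 * bb ^ j) = - (PP ^ E * (\<Sum>j<K. l j * bb ^ j))"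
        by (simp add: \<phi>0 sum_distrib_left sum_negf mult.assoc)
      have g1: "(\<Sum>j<Suc K'. \<phi> $ 1 $ j * a ^ 1 * bb ^ j) = a" for K'
        by (simp add: \<phi>1 sum.lessThan_Suc_shift del: sum.lessThan_Suc)
      have g2: "(\<Sum>j<K. \<phi> $ (Suc (Suc i)) $ j * a ^ (Suc (Suc i)) * bb ^ j) = 0" for i
        by (simp add: \<phi>2)
      show "PP ^ K dvd 0 - ps2 \<phi> (z (nk k)) (b k) K"
      proof (cases K)
        case 0 then show ?thesis by simp
      next
        case (Suc K1)
        show ?thesis
        proof (cases K1)
          case 0
          have "ps2 \<phi> a bb K = - (PP ^ E * l 0)" using Suc 0 by (simp add: ps2_def \<phi>0)
          moreover have "PP dvd PP ^ E" using E1 by (simp add: dvd_power)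
          then have "PP dvd PP ^ E * l 0" by (rule dvd_mult2)
          ultimately show ?thesis using Suc 0 by (simp add: a_def bb_def)
        next
          case (Suc K2)
          have KK: "K = Suc (Suc K2)" using \<open>K = Suc K1\<close> Suc by simp
          have ps: "ps2 \<phi> a bb K = a - PP ^ E * (\<Sum>j<K. l j * bb ^ j)"
          proof -
            have "ps2 \<phi> a bb K = (\<Sum>j<K. \<phi> $ 0 $ j * a ^ 0 * bb ^ j) + (\<Sum>j<K. \<phi> $ 1 $ j * a ^ 1 * bb ^ j)
                 + (\<Sum>i<K2. \<Sum>j<K. \<phi> $ (Suc (Suc i)) $ j * a ^ (Suc (Suc i)) * bb ^ j)"
              unfolding ps2_def KK by (simp only: sum.lessThan_Suc_shift One_nat_def add.assoc)
            also have "\<dots> = - (PP ^ E * (\<Sum>j<K. l j * bb ^ j)) + a"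
              unfolding g0 g2 using g1[of "Suc K2"] by (simp add: KK)
            finally show ?thesis by simp
          qed
          define L where "L = k + 2 * K"
          have aL: "a = PP ^ E * poly (Gk L) bb" unfolding a_def bb_def by (rule nk_val) (simp add: L_def)
          define Dg where "Dg = K + Suc (degree (Gk L))"
          have pD: "poly (Gk L) bb = (\<Sum>j<Dg. poly.coeff (Gk L) j * bb ^ j)"
            unfolding poly_altdef
          proof (rule sum.mono_neutral_left)
            show "\<forall>i\<in>{..<Dg} - {..degree (Gk L)}. poly.coeff (Gk L) i * bb ^ i = 0"
              by (auto simp: coeff_eq_0)
          qed (auto simp: Dg_def)
          have high: "PP ^ K dvd (\<Sum>j<Dg. poly.coeff (Gk L) j * bb ^ j) - (\<Sum>j<K. poly.coeff (Gk L) j * bb ^ j)"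
          proof -
            have sub: "{..<K} \<subseteq> {..<Dg}" by (auto simp: Dg_def)
            have "(\<Sum>j<Dg. poly.coeff (Gk L) j * bb ^ j) - (\<Sum>j<K. poly.coeff (Gk L) j * bb ^ j)
                = (\<Sum>j\<in>{..<Dg} - {..<K}. poly.coeff (Gk L) j * bb ^ j)"
              by (rule sum_diff[OF _ sub, symmetric]) simp
            moreover have "PP ^ K dvd (\<Sum>j\<in>{..<Dg} - {..<K}. poly.coeff (Gk L) j * bb ^ j)"
            proof (rule dvd_sum)
              fix j assume "j \<in> {..<Dg} - {..<K}"
              then have "K \<le> j" by auto
              then show "PP ^ K dvd poly.coeff (Gk L) j * bb ^ j"
                using pow_dvd_pow_ge[OF bbd] by (simp add: dvd_mult)
            qed
            ultimately show ?thesis by simp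
          qed
          have low: "PP ^ K dvd (\<Sum>j<K. poly.coeff (Gk L) j * bb ^ j) - (\<Sum>j<K. l j * bb ^ j)"
          proof (rule cong_sum)
            fix j assume "j \<in> {..<K}"
            then have "K + j \<le> L" by (simp add: L_def)
            then have "PP ^ K dvd poly.coeff (Gk L) j - l j" using lL cong_sym by blast
            then show "PP ^ K dvd poly.coeff (Gk L) j * bb ^ j - l j * bb ^ j"
              by (intro cong_mult) simp_all
          qed
          have "PP ^ K dvd poly (Gk L) bb - (\<Sum>j<K. l j * bb ^ j)"
            unfolding pD using cong_trans[OF high low] .
          then have "PP ^ K dvd PP ^ E * (poly (Gk L) bb - (\<Sum>j<K. l j * bb ^ j))" by (rule dvd_mult)
          then have "PP ^ K dvd a - PP ^ E * (\<Sum>j<K. l j * bb ^ j)" using aL by (simp add: algebra_simps)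
          then have "PP ^ K dvd ps2 \<phi> a bb K" by (simp only: ps)
          then show ?thesis by (simp add: a_def bb_def)
        qed
      qed
    qed
    define S where "S = range (\<lambda>k. (p * nk k, p * k))"
    have A: "k * k \<le> p * nk k" for k using nk_sq[of k] p1
      by (metis le_trans mult_le_mono1 nat_mult_1)
    have "infinite S" unfolding S_def by (rule not_in_lines(1)[OF A]) (rule p1)
    moreover have "\<not> (\<exists>\<L>. finite \<L> \<and> (\<forall>L \<in> \<L>. is_line L) \<and> S \<subseteq> \<Union>\<L>)"
      unfolding S_def by (rule not_in_lines(2)[OF A]) (rule p1)
    moreover have "\<forall>(n, m) \<in> S. eval2 \<phi> (fgl_mult_at F n \<alpha>1) (fgl_mult_at F m \<alpha>2) = 0"
    proof
      fix nm assume "nm \<in> S"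
      then obtain k where "nm = (p * nk k, p * k)" unfolding S_def by auto
      then show "case nm of (n, m) \<Rightarrow> eval2 \<phi> (fgl_mult_at F n \<alpha>1) (fgl_mult_at F m \<alpha>2) = 0"
        using zx wx ev b_def by simp
    qed
    ultimately show ?thesis using \<phi>nz by blast
  qed
qed

end

theorem proposition2p11:
  fixes F :: "'p::nontriv_card padic fps fps"
    and \<alpha>1 \<alpha>2 :: "'p padic"
  assumes "prime CARD('p)"
    and "formal_group_law F"
    and "finite_height F"
    and "(of_nat CARD('p) :: 'p padic) dvd \<alpha>1"
    and "(of_nat CARD('p) :: 'p padic) dvd \<alpha>2"
    and "padic_val \<alpha>1 = padic_val \<alpha>2"
  shows "\<exists>\<phi> :: 'p padic fps fps. \<phi> \<noteq> 0 \<and>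
           (\<exists>S :: (nat \<times> nat) set. infinite S \<and>
              (\<forall>(n, m) \<in> S. eval2 \<phi> (fgl_mult_at F n \<alpha>1) (fgl_mult_at F m \<alpha>2) = 0) \<and>
              \<not> (\<exists>\<L>. finite \<L> \<and> (\<forall>L \<in> \<L>. is_line L) \<and> S \<subseteq> \<Union>\<L>))"
proof -
  interpret pprime "TYPE('p)" by unfold_locales (rule assms(1))
  show ?thesis by (rule main_result) (use assms in auto)
qed

end
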